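(* Let $\mathcal{H}$ be a complex Hilbert space. The map $T\mapsto T'=T(T^*T)^{-1}$ (Cauchy dual) is a bijection from the set of all $\Delta_T$-regular concave operators $T\in\mathcal{B}(\mathcal{H})$ onto the set of all left invertible operators $C\in\mathcal{B}(\mathcal{H})$ which are $2$-hypercontractions, are $D_C^2$-regular, and satisfy $\|P_{\mathcal{D}_C}Ch\|\le\|C^*Ch\|$ for all $h\in\mathcal{D}_C$.
   Context: $\Delta_T=T^*T-I$. $T$ is concave if $T^{*2}T^2-2T^*T+I\le 0$; such $T$ is expansive, hence left invertible, so $T^*T$ is invertible and the Cauchy dual $T'=T(T^*T)^{-1}$ is defined. For a positive operator $A$, an operator $T$ is $A$-regular if $AT=A^{1/2}TA^{1/2}$. An operator $C$ is a $2$-hypercontraction if $I-C^*C\ge0$ and $I-2C^*C+C^{*2}C^2\ge 0$. For a contraction $C$, $D_C=(I-C^*C)^{1/2}$, $\mathcal{D}_C=\overline{\mathcal{R}(D_C)}$, and $D_C^2$-regularity means $D_C^2C=D_CCD_C$. $P_{\mathcal{M}}$ is the orthogonal projection onto $\mathcal{M}$. *)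

theory Defs
  imports "HOL-Analysis.Analysis"
begin

class chilbert_space = banach +
  fixes scaleC :: "complex \<Rightarrow> 'a \<Rightarrow> 'a"
    and cinner :: "'a \<Rightarrow> 'a \<Rightarrow> complex"
  assumes scaleC_add_right: "scaleC a (x + y) = scaleC a x + scaleC a y"
    and scaleC_add_left: "scaleC (a + b) x = scaleC a x + scaleC b x"
    and scaleC_scaleC: "scaleC a (scaleC b x) = scaleC (a * b) x"
    and scaleC_one: "scaleC 1 x = x"
    and scaleR_scaleC: "scaleR r x = scaleC (complex_of_real r) x"
    and cinner_add_left: "cinner (x + y) z = cinner x z + cinner y z"
    and cinner_scaleC_left: "cinner (scaleC a x) y = cnj a * cinner x y"
    and cinner_commute: "cinner x y = cnj (cinner y x)"
    and cinner_Re_nonneg: "0 \<le> Re (cinner x x)"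
    and cinner_eq_zero_iff: "cinner x x = 0 \<longleftrightarrow> x = 0"
    and norm_eq_sqrt_cinner: "norm x = sqrt (Re (cinner x x))"

definition bounded_clinear :: "('a::chilbert_space \<Rightarrow> 'b::chilbert_space) \<Rightarrow> bool" where
  "bounded_clinear T \<longleftrightarrow>
     (\<forall>x y. T (x + y) = T x + T y) \<and> (\<forall>a x. T (scaleC a x) = scaleC a (T x)) \<and>
     (\<exists>K. \<forall>x. norm (T x) \<le> norm x * K)"

definition adj :: "('a::chilbert_space \<Rightarrow> 'a) \<Rightarrow> ('a \<Rightarrow> 'a)" where
  "adj T = (THE S. \<forall>x y. cinner (T x) y = cinner x (S y))"

definition positive_op :: "('a::chilbert_space \<Rightarrow> 'a) \<Rightarrow> bool" where
  "positive_op A \<longleftrightarrow> (\<forall>x. Im (cinner (A x) x) = 0 \<and> 0 \<le> Re (cinner (A x) x))"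

definition op_le :: "('a::chilbert_space \<Rightarrow> 'a) \<Rightarrow> ('a \<Rightarrow> 'a) \<Rightarrow> bool" where
  "op_le A B \<longleftrightarrow> positive_op (\<lambda>x. B x - A x)"

definition op_sqrt :: "('a::chilbert_space \<Rightarrow> 'a) \<Rightarrow> ('a \<Rightarrow> 'a)" where
  "op_sqrt A = (THE B. bounded_clinear B \<and> positive_op B \<and> B \<circ> B = A)"

definition Delta :: "('a::chilbert_space \<Rightarrow> 'a) \<Rightarrow> ('a \<Rightarrow> 'a)" where
  "Delta T = (\<lambda>x. adj T (T x) - x)"

definition concave_op :: "('a::chilbert_space \<Rightarrow> 'a) \<Rightarrow> bool" where
  "concave_op T \<longleftrightarrow>
     op_le (\<lambda>x. adj T (adj T (T (T x))) - 2 *\<^sub>R adj T (T x) + x) (\<lambda>x. 0)"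

definition cauchy_dual :: "('a::chilbert_space \<Rightarrow> 'a) \<Rightarrow> ('a \<Rightarrow> 'a)" where
  "cauchy_dual T = T \<circ> inv (adj T \<circ> T)"

definition regular_op :: "('a::chilbert_space \<Rightarrow> 'a) \<Rightarrow> ('a \<Rightarrow> 'a) \<Rightarrow> bool" where
  "regular_op A T \<longleftrightarrow> A \<circ> T = op_sqrt A \<circ> T \<circ> op_sqrt A"

definition left_invertible :: "('a::chilbert_space \<Rightarrow> 'a) \<Rightarrow> bool" where
  "left_invertible C \<longleftrightarrow> (\<exists>S. bounded_clinear S \<and> S \<circ> C = id)"

definition hypercontraction2 :: "('a::chilbert_space \<Rightarrow> 'a) \<Rightarrow> bool" where
  "hypercontraction2 C \<longleftrightarrow>
     positive_op (\<lambda>x. x - adj C (C x)) \<and>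
     positive_op (\<lambda>x. x - 2 *\<^sub>R adj C (C x) + adj C (adj C (C (C x))))"

definition defect_op :: "('a::chilbert_space \<Rightarrow> 'a) \<Rightarrow> ('a \<Rightarrow> 'a)" where
  "defect_op C = op_sqrt (\<lambda>x. x - adj C (C x))"

definition orth_proj :: "'a::chilbert_space set \<Rightarrow> 'a \<Rightarrow> 'a" where
  "orth_proj M x = (THE y. y \<in> M \<and> (\<forall>z\<in>M. cinner (x - y) z = 0))"

end

theory Submission
  imports Defs
begin



lemma scaleC_zero_left [simp]: "scaleC 0 (x::'a::chilbert_space) = 0"
  using scaleR_scaleC[of 0 x] by simp

lemma scaleC_minus1: "scaleC (-1) (x::'a::chilbert_space) = - x"
  using scaleR_scaleC[of "-1" x] by simp

lemma scaleC_zero_right [simp]: "scaleC a (0::'a::chilbert_space) = 0"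
  using scaleC_add_right[of a 0 0] by simp

lemma scaleC_minus_right: "scaleC a (- (x::'a::chilbert_space)) = - scaleC a x"
proof -
  have "scaleC a x + scaleC a (- x) = 0" using scaleC_add_right[of a x "-x"] by simp
  then show ?thesis by (simp add: add_eq_0_iff)
qed

lemma scaleC_diff_right: "scaleC a ((x::'a::chilbert_space) - y) = scaleC a x - scaleC a y"
  using scaleC_add_right[of a x "-y"] by (simp add: scaleC_minus_right)

lemma scaleC_minus_left: "scaleC (- a) (x::'a::chilbert_space) = - scaleC a x"
proof -
  have "scaleC a x + scaleC (- a) x = 0" using scaleC_add_left[of a "-a" x] by simp
  then show ?thesis by (simp add: add_eq_0_iff)
qed

lemma scaleC_diff_left: "scaleC (a - b) (x::'a::chilbert_space) = scaleC a x - scaleC b x"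
  using scaleC_add_left[of a "-b" x] by (simp add: scaleC_minus_left)

lemma scaleC_of_real: "scaleC (complex_of_real r) (x::'a::chilbert_space) = r *\<^sub>R x"
  by (simp add: scaleR_scaleC)

lemma cinner_add_right: "cinner (x::'a::chilbert_space) (y + z) = cinner x y + cinner x z"
  by (subst (1 2 3) cinner_commute) (simp add: cinner_add_left)

lemma cinner_scaleC_right: "cinner (x::'a::chilbert_space) (scaleC a y) = a * cinner x y"
  by (subst (1 2) cinner_commute) (simp add: cinner_scaleC_left)

lemma cinner_zero_left [simp]: "cinner 0 (y::'a::chilbert_space) = 0"
  using cinner_add_left[of 0 0 y] by simp

lemma cinner_zero_right [simp]: "cinner (x::'a::chilbert_space) 0 = 0"
  using cinner_add_right[of x 0 0] by simp

lemma cinner_minus_left: "cinner (- (x::'a::chilbert_space)) y = - cinner x y"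
proof -
  have "cinner x y + cinner (- x) y = 0" using cinner_add_left[of x "-x" y] by simp
  then show ?thesis by (simp add: add_eq_0_iff)
qed

lemma cinner_minus_right: "cinner (x::'a::chilbert_space) (- y) = - cinner x y"
proof -
  have "cinner x y + cinner x (- y) = 0" using cinner_add_right[of x y "-y"] by simp
  then show ?thesis by (simp add: add_eq_0_iff)
qed

lemma cinner_diff_left: "cinner ((x::'a::chilbert_space) - y) z = cinner x z - cinner y z"
  using cinner_add_left[of x "-y" z] by (simp add: cinner_minus_left)

lemma cinner_diff_right: "cinner (x::'a::chilbert_space) (y - z) = cinner x y - cinner x z"
  using cinner_add_right[of x y "-z"] by (simp add: cinner_minus_right)

lemma cinner_scaleR_left: "cinner (r *\<^sub>R (x::'a::chilbert_space)) y = complex_of_real r * cinner x y"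
  by (simp add: scaleR_scaleC cinner_scaleC_left)

lemma cinner_scaleR_right: "cinner (x::'a::chilbert_space) (r *\<^sub>R y) = complex_of_real r * cinner x y"
  by (simp add: scaleR_scaleC cinner_scaleC_right)

lemma cinner_sum_left: "cinner (sum f A) (y::'a::chilbert_space) = (\<Sum>i\<in>A. cinner (f i) y)"
  by (induction A rule: infinite_finite_induct) (auto simp: cinner_add_left)

lemma cinner_sum_right: "cinner (y::'a::chilbert_space) (sum f A) = (\<Sum>i\<in>A. cinner y (f i))"
  by (induction A rule: infinite_finite_induct) (auto simp: cinner_add_right)

lemma Im_cinner_self [simp]: "Im (cinner (x::'a::chilbert_space) x) = 0"
proof -
  have "Im (cinner x x) = Im (cnj (cinner x x))" by (subst (1) cinner_commute) (rule refl)
  then show ?thesis by simp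
qed

lemma cinner_self: "cinner (x::'a::chilbert_space) x = complex_of_real ((norm x)\<^sup>2)"
proof -
  have "Re (cinner x x) = (norm x)\<^sup>2" using norm_eq_sqrt_cinner[of x] cinner_Re_nonneg[of x] by simp
  then show ?thesis using Im_cinner_self[of x] by (simp add: complex_eq_iff)
qed

lemma Re_cinner_self: "Re (cinner (x::'a::chilbert_space) x) = (norm x)\<^sup>2"
  by (simp add: cinner_self)

lemma norm_scaleC: "norm (scaleC a (x::'a::chilbert_space)) = cmod a * norm x"
proof -
  have "(norm (scaleC a x))\<^sup>2 = Re (cinner (scaleC a x) (scaleC a x))" by (rule Re_cinner_self[symmetric])
  also have "\<dots> = Re (cnj a * a * complex_of_real ((norm x)\<^sup>2))"
    by (simp only: cinner_scaleC_left cinner_scaleC_right cinner_self[of x] mult.assoc mult.left_commute)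
  also have "\<dots> = (cmod a)\<^sup>2 * (norm x)\<^sup>2"
    by (simp only: complex_norm_square[symmetric] mult.commute[of "cnj a" a] of_real_mult[symmetric] Re_complex_of_real)
  finally have "(norm (scaleC a x))\<^sup>2 = (cmod a * norm x)\<^sup>2" by (simp add: power_mult_distrib)
  then show ?thesis by (simp add: power2_eq_iff_nonneg)
qed

lemma norm_add_sq: "(norm ((x::'a::chilbert_space) + y))\<^sup>2 = (norm x)\<^sup>2 + 2 * Re (cinner x y) + (norm y)\<^sup>2"
proof -
  have "Re (cinner y x) = Re (cinner x y)" by (metis cinner_commute complex_cnj_cnj cnj.sel(1))
  then show ?thesis
    by (simp add: Re_cinner_self[symmetric] cinner_add_left cinner_add_right)
qed

lemma norm_diff_sq: "(norm ((x::'a::chilbert_space) - y))\<^sup>2 = (norm x)\<^sup>2 - 2 * Re (cinner x y) + (norm y)\<^sup>2"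
  using norm_add_sq[of x "-y"] by (simp add: cinner_minus_right)

lemma Re_cinner_le: "Re (cinner (x::'a::chilbert_space) y) \<le> norm x * norm y"
proof -
  have "norm (x + y) \<le> norm x + norm y" by (rule norm_triangle_ineq)
  then have "(norm (x + y))\<^sup>2 \<le> (norm x + norm y)\<^sup>2" by (simp add: power_mono)
  then show ?thesis by (simp add: norm_add_sq power2_sum)
qed

lemma cinner_CS: "cmod (cinner (x::'a::chilbert_space) y) \<le> norm x * norm y"
proof (cases "cinner x y = 0")
  case True then show ?thesis by simp
next
  case False
  define u where "u = cnj (cinner x y) / complex_of_real (cmod (cinner x y))"
  have cu: "cmod u = 1" using False by (simp add: u_def norm_divide)
  have "cinner x (scaleC u y) = complex_of_real (cmod (cinner x y))"
  proof -
    have "cnj (cinner x y) * cinner x y = complex_of_real ((cmod (cinner x y))\<^sup>2)"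
      by (metis complex_norm_square mult.commute)
    then show ?thesis using False
      by (simp add: cinner_scaleC_right u_def power2_eq_square)
  qed
  then have "cmod (cinner x y) = Re (cinner x (scaleC u y))" by simp
  also have "\<dots> \<le> norm x * norm (scaleC u y)" by (rule Re_cinner_le)
  also have "\<dots> = norm x * norm y" by (simp add: norm_scaleC cu)
  finally show ?thesis .
qed

lemma cinner_bounded_bilinear: "bounded_bilinear (cinner :: 'a::chilbert_space \<Rightarrow> 'a \<Rightarrow> complex)"
  apply (unfold_locales)
      apply (simp_all add: cinner_add_left cinner_add_right cinner_scaleR_left cinner_scaleR_right scaleR_conv_of_real)
  by (intro exI[of _ 1] allI) (simp add: cinner_CS)

lemma cinner_ext_left: "(\<And>z. cinner z (x::'a::chilbert_space) = cinner z y) \<Longrightarrow> x = y"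
proof -
  assume "\<And>z. cinner z x = cinner z y"
  then have "cinner (x - y) (x - y) = 0" by (simp add: cinner_diff_right)
  then show ?thesis by (simp add: cinner_eq_zero_iff)
qed

lemma cinner_ext_right: "(\<And>z. cinner (x::'a::chilbert_space) z = cinner y z) \<Longrightarrow> x = y"
proof -
  assume "\<And>z. cinner x z = cinner y z"
  then have "cinner (x - y) (x - y) = 0" by (simp add: cinner_diff_left)
  then show ?thesis by (simp add: cinner_eq_zero_iff)
qed

lemma tendsto_cinner [tendsto_intros]:
  "(f \<longlongrightarrow> a) F \<Longrightarrow> (g \<longlongrightarrow> b) F \<Longrightarrow> ((\<lambda>n. cinner (f n) (g n)) \<longlongrightarrow> cinner a b) F"
  by (rule bounded_bilinear.tendsto[OF cinner_bounded_bilinear])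

lemma continuous_on_cinner [continuous_intros]:
  "continuous_on S f \<Longrightarrow> continuous_on S g \<Longrightarrow> continuous_on S (\<lambda>x. cinner (f x) (g x))"
  by (rule bounded_bilinear.continuous_on[OF cinner_bounded_bilinear])

section \<open>Bounded operators\<close>

lemma bcl_add: "bounded_clinear T \<Longrightarrow> T (x + y) = T x + T y"
  by (simp add: bounded_clinear_def)

lemma bcl_scaleC: "bounded_clinear T \<Longrightarrow> T (scaleC a x) = scaleC a (T x)"
  by (simp add: bounded_clinear_def)

lemma bcl_bounded_linear: "bounded_clinear T \<Longrightarrow> bounded_linear T"
  unfolding bounded_clinear_def
  by (metis bounded_linear_intro scaleR_scaleC)

lemma bcl_bound: "bounded_clinear T \<Longrightarrow> \<exists>K>0. \<forall>x. norm (T x) \<le> norm x * K"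
  using bcl_bounded_linear bounded_linear.pos_bounded by blast

lemma bcl_zero [simp]: "bounded_clinear T \<Longrightarrow> T 0 = 0"
  using bcl_bounded_linear linear_0 bounded_linear.linear by blast

lemma bcl_diff: "bounded_clinear T \<Longrightarrow> T (x - y) = T x - T y"
  using bcl_bounded_linear bounded_linear.linear linear_diff by blast

lemma bcl_minus: "bounded_clinear T \<Longrightarrow> T (- x) = - T x"
  using bcl_bounded_linear bounded_linear.linear linear_neg by blast

lemma bcl_scaleR: "bounded_clinear T \<Longrightarrow> T (r *\<^sub>R x) = r *\<^sub>R T x"
  using bcl_bounded_linear bounded_linear.linear linear_scale by blast

lemma bcl_sum: "bounded_clinear T \<Longrightarrow> T (sum f A) = (\<Sum>i\<in>A. T (f i))"
  using bcl_bounded_linear bounded_linear.linear linear_sum by blast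

lemma bcl_cont: "bounded_clinear T \<Longrightarrow> (f \<longlongrightarrow> a) F \<Longrightarrow> ((\<lambda>n. T (f n)) \<longlongrightarrow> T a) F"
  using bcl_bounded_linear bounded_linear.tendsto by blast

lemma bcl_continuous_on: "bounded_clinear T \<Longrightarrow> continuous_on S T"
  using bcl_bounded_linear linear_continuous_on by blast

lemma bcl_intro:
  assumes "\<And>x y. T (x + y) = T x + T y" "\<And>a x. T (scaleC a x) = scaleC a (T x)"
    "\<And>x. norm (T x) \<le> norm x * K"
  shows "bounded_clinear T"
  using assms unfolding bounded_clinear_def by blast

lemma bcl_id: "bounded_clinear (\<lambda>x. x)"
  by (rule bcl_intro[where K=1]) auto

lemma bcl_comp: "bounded_clinear S \<Longrightarrow> bounded_clinear T \<Longrightarrow> bounded_clinear (\<lambda>x. S (T x))"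
proof -
  assume S: "bounded_clinear S" and T: "bounded_clinear T"
  obtain K1 where K1: "\<And>x. norm (S x) \<le> norm x * K1" "K1 > 0" using bcl_bound[OF S] by blast
  obtain K2 where K2: "\<And>x. norm (T x) \<le> norm x * K2" "K2 > 0" using bcl_bound[OF T] by blast
  show ?thesis
  proof (rule bcl_intro[where K="K2*K1"])
    fix x
    have "norm (S (T x)) \<le> norm (T x) * K1" by (rule K1)
    also have "\<dots> \<le> norm x * K2 * K1" using K2 K1(2) by (simp add: mult_right_mono)
    finally show "norm (S (T x)) \<le> norm x * (K2 * K1)" by (simp add: mult.assoc)
  qed (simp_all add: bcl_add[OF S] bcl_add[OF T] bcl_scaleC[OF S] bcl_scaleC[OF T])
qed

lemma bcl_comp': "bounded_clinear S \<Longrightarrow> bounded_clinear T \<Longrightarrow> bounded_clinear (S \<circ> T)"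
  using bcl_comp by (simp add: comp_def)

lemma bcl_add_op: "bounded_clinear S \<Longrightarrow> bounded_clinear T \<Longrightarrow> bounded_clinear (\<lambda>x. S x + T x)"
proof -
  assume S: "bounded_clinear S" and T: "bounded_clinear T"
  obtain K1 where K1: "\<And>x. norm (S x) \<le> norm x * K1" using bcl_bound[OF S] by blast
  obtain K2 where K2: "\<And>x. norm (T x) \<le> norm x * K2" using bcl_bound[OF T] by blast
  show ?thesis
  proof (rule bcl_intro[where K="K1+K2"])
    fix x
    have "norm (S x + T x) \<le> norm (S x) + norm (T x)" by (rule norm_triangle_ineq)
    also have "\<dots> \<le> norm x * K1 + norm x * K2" using K1 K2 by (rule add_mono)
    finally show "norm (S x + T x) \<le> norm x * (K1 + K2)" by (simp add: distrib_left)
  qed (simp_all add: bcl_add[OF S] bcl_add[OF T] bcl_scaleC[OF S] bcl_scaleC[OF T] scaleC_add_right)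
qed

lemma bcl_scaleR_op: "bounded_clinear T \<Longrightarrow> bounded_clinear (\<lambda>x. r *\<^sub>R T x)"
proof -
  assume T: "bounded_clinear T"
  obtain K where K: "\<And>x. norm (T x) \<le> norm x * K" using bcl_bound[OF T] by blast
  show ?thesis
  proof (rule bcl_intro[where K="\<bar>r\<bar>*K"])
    fix x
    show "norm (r *\<^sub>R T x) \<le> norm x * (\<bar>r\<bar> * K)"
      using K[of x] by (simp add: mult_left_mono mult.left_commute)
  next
    fix a x show "r *\<^sub>R T (scaleC a x) = scaleC a (r *\<^sub>R T x)"
      by (simp add: bcl_scaleC[OF T] scaleR_scaleC scaleC_scaleC mult.commute)
  qed (simp_all add: bcl_add[OF T] scaleR_add_right)
qed

lemma bcl_minus_op: "bounded_clinear T \<Longrightarrow> bounded_clinear (\<lambda>x. - T x)"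
  using bcl_scaleR_op[of T "-1"] by simp

lemma bcl_diff_op: "bounded_clinear S \<Longrightarrow> bounded_clinear T \<Longrightarrow> bounded_clinear (\<lambda>x. S x - T x)"
  using bcl_add_op[OF _ bcl_minus_op] by (simp add: )

lemma bcl_zero_op: "bounded_clinear (\<lambda>x. 0)"
  by (rule bcl_intro[where K=0]) auto

lemma bcl_funpow: fixes T :: "'a::chilbert_space \<Rightarrow> 'a" shows "bounded_clinear T \<Longrightarrow> bounded_clinear (T ^^ n)"
proof (induction n)
  case 0
  have "T ^^ 0 = (\<lambda>x. x)" by (simp add: fun_eq_iff)
  then show ?case using bcl_id by (simp add: id_def)
next
  case (Suc n) then show ?case using bcl_comp[of T "T ^^ n"] by simp
qed

lemma bcl_sum_op: "(\<And>i. i \<in> A \<Longrightarrow> bounded_clinear (F i)) \<Longrightarrow> bounded_clinear (\<lambda>x. \<Sum>i\<in>A. F i x)"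
  by (induction A rule: infinite_finite_induct) (auto simp: bcl_zero_op bcl_add_op)



section \<open>Subspaces, projection theorem\<close>

definition csub :: "'a::chilbert_space set \<Rightarrow> bool" where
  "csub M \<longleftrightarrow> 0 \<in> M \<and> (\<forall>x\<in>M. \<forall>y\<in>M. x + y \<in> M) \<and> (\<forall>a. \<forall>x\<in>M. scaleC a x \<in> M)"

lemma csub_diff: "csub M \<Longrightarrow> x \<in> M \<Longrightarrow> y \<in> M \<Longrightarrow> x - y \<in> M"
  unfolding csub_def by (metis diff_conv_add_uminus scaleC_minus1)

lemma csub_scaleR: "csub M \<Longrightarrow> x \<in> M \<Longrightarrow> r *\<^sub>R x \<in> M"
  unfolding csub_def by (simp add: scaleR_scaleC)

lemma parallelogram:
  fixes a b :: "'a::chilbert_space"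
  shows "(norm (a - b))\<^sup>2 + (norm (a + b))\<^sup>2 = 2 * (norm a)\<^sup>2 + 2 * (norm b)\<^sup>2"
  by (simp add: norm_add_sq norm_diff_sq)

lemma nearest_exists:
  fixes x :: "'a::chilbert_space"
  assumes M: "csub M" "closed M"
  shows "\<exists>y\<in>M. \<forall>m\<in>M. norm (x - y) \<le> norm (x - m)"
proof -
  define D where "D = (\<lambda>m. norm (x - m)) ` M"
  define d where "d = Inf D"
  have ne: "D \<noteq> {}" using M(1) by (auto simp: D_def csub_def)
  have bdd: "bdd_below D" unfolding D_def by (rule bdd_belowI[of _ 0]) auto
  have dle: "d \<le> norm (x - m)" if "m \<in> M" for m
    unfolding d_def using bdd that by (auto simp: D_def intro: cInf_lower)
  have d0: "0 \<le> d" unfolding d_def using ne by (intro cInf_greatest) (auto simp: D_def)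
  have "\<exists>m\<in>M. norm (x - m) < d + 1 / (Suc n)" for n
  proof -
    have "Inf D < d + 1 / Suc n" by (simp add: d_def)
    then obtain t where "t \<in> D" "t < d + 1 / Suc n" using cInf_lessD[OF ne] by blast
    then show ?thesis by (auto simp: D_def)
  qed
  then obtain m where m: "\<And>n. m n \<in> M" "\<And>n. norm (x - m n) < d + 1 / Suc n" by metis
  define e where "e = (\<lambda>n::nat. 1 / real (Suc n))"
  have e_pos: "e n > 0" for n by (simp add: e_def)
  have e_le1: "e n \<le> 1" for n by (simp add: e_def)
  have e_mono: "p \<ge> N \<Longrightarrow> e p \<le> e N" for p N by (simp add: e_def frac_le)
  have key: "(norm (m p - m q))\<^sup>2 \<le> (4*d+2) * e p + (4*d+2) * e q" for p q
  proof -
    have mid: "(1/2::real) *\<^sub>R (m p + m q) \<in> M"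
      using M(1) m(1) by (simp add: csub_def csub_scaleR)
    have "d \<le> norm (x - (1/2::real) *\<^sub>R (m p + m q))" by (rule dle[OF mid])
    then have "4 * d\<^sup>2 \<le> (norm (2 *\<^sub>R (x - (1/2::real) *\<^sub>R (m p + m q))))\<^sup>2"
      using d0 by (simp add: power_mult_distrib power_mono)
    also have "2 *\<^sub>R (x - (1/2::real) *\<^sub>R (m p + m q)) = (x - m p) + (x - m q)"
      by (simp add: algebra_simps scaleR_2)
    finally have A: "4 * d\<^sup>2 \<le> (norm ((x - m p) + (x - m q)))\<^sup>2" .
    have P: "(norm ((x - m p) - (x - m q)))\<^sup>2 + (norm ((x - m p) + (x - m q)))\<^sup>2
      = 2 * (norm (x - m p))\<^sup>2 + 2 * (norm (x - m q))\<^sup>2" by (rule parallelogram)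
    have "norm (x - m p) \<le> d + e p" using m(2)[of p] by (simp add: e_def)
    then have Bp: "(norm (x - m p))\<^sup>2 \<le> (d + e p)\<^sup>2" by (simp add: power_mono)
    have "norm (x - m q) \<le> d + e q" using m(2)[of q] by (simp add: e_def)
    then have Bq: "(norm (x - m q))\<^sup>2 \<le> (d + e q)\<^sup>2" by (simp add: power_mono)
    have "(x - m p) - (x - m q) = m q - m p" by simp
    then have "(norm (m p - m q))\<^sup>2 \<le> 2 * (d + e p)\<^sup>2 + 2 * (d + e q)\<^sup>2 - 4 * d\<^sup>2"
      using P A Bp Bq by (simp add: norm_minus_commute)
    also have "\<dots> = (4*d + 2 * e p) * e p + (4*d + 2 * e q) * e q"
      by (simp add: power2_eq_square algebra_simps)
    also have "\<dots> \<le> (4*d+2) * e p + (4*d+2) * e q"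
      using e_le1[of p] e_le1[of q] e_pos[of p] e_pos[of q] d0
      by (intro add_mono mult_right_mono) auto
    finally show ?thesis .
  qed
  have "Cauchy m"
  proof (rule metric_CauchyI)
    fix \<epsilon> :: real assume "\<epsilon> > 0"
    have "\<epsilon>\<^sup>2 / (8*d+4) > 0" using \<open>\<epsilon> > 0\<close> d0 by (simp add: add_nonneg_pos)
    then obtain N where N: "1 / real (Suc N) < \<epsilon>\<^sup>2 / (8*d+4)"
      using nat_approx_posE by blast
    show "\<exists>M. \<forall>p\<ge>M. \<forall>q\<ge>M. dist (m p) (m q) < \<epsilon>"
    proof (intro exI allI impI)
      fix p q assume pq: "p \<ge> N" "q \<ge> N"
      have "(dist (m p) (m q))\<^sup>2 \<le> (4*d+2) * e p + (4*d+2) * e q" by (simp add: dist_norm key)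
      also have "\<dots> \<le> (4*d+2) * e N + (4*d+2) * e N"
        using pq d0 by (intro add_mono mult_left_mono e_mono) auto
      also have "\<dots> = (8*d+4) * e N" by simp
      also have "\<dots> < (8*d+4) * (\<epsilon>\<^sup>2 / (8*d+4))"
        using N d0 by (intro mult_strict_left_mono) (auto simp: e_def)
      also have "\<dots> = \<epsilon>\<^sup>2" using d0 by simp
      finally show "dist (m p) (m q) < \<epsilon>"
        using \<open>\<epsilon> > 0\<close> by (simp add: power_less_imp_less_base)
    qed
  qed
  then obtain y where y: "m \<longlonglongrightarrow> y" using Cauchy_convergent_iff convergent_def by blast
  have yM: "y \<in> M" using M(2) m(1) y closed_sequentially by blast
  have "(\<lambda>n. norm (x - m n)) \<longlonglongrightarrow> norm (x - y)" by (intro tendsto_intros y)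
  moreover have "(\<lambda>n. d + e n) \<longlonglongrightarrow> d + 0"
    unfolding e_def by (intro tendsto_intros) (rule LIMSEQ_inverse_real_of_nat[unfolded inverse_eq_divide])
  ultimately have "norm (x - y) \<le> d"
    using m(2) by (intro LIMSEQ_le[where X="\<lambda>n. norm (x - m n)" and Y="\<lambda>n. d + e n", simplified])
      (auto simp: e_def less_imp_le)
  then show ?thesis using yM dle by force
qed

lemma nearest_orth:
  fixes x y :: "'a::chilbert_space"
  assumes M: "csub M" and yM: "y \<in> M" and near: "\<forall>m\<in>M. norm (x - y) \<le> norm (x - m)"
    and zM: "z \<in> M"
  shows "cinner (x - y) z = 0"
proof -
  define w where "w = x - y"
  define a where "a = cinner z w"
  have ineq: "2 * r * (cmod a)\<^sup>2 \<le> r\<^sup>2 * (cmod a)\<^sup>2 * (norm z)\<^sup>2" if r: "r > 0" for r :: real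
  proof -
    define t where "t = complex_of_real r * a"
    have "y + scaleC t z \<in> M" using M yM zM by (simp add: csub_def)
    then have "norm w \<le> norm (w - scaleC t z)" using near by (simp add: w_def algebra_simps)
    then have "(norm w)\<^sup>2 \<le> (norm (w - scaleC t z))\<^sup>2" by (simp add: power_mono)
    also have "\<dots> = (norm w)\<^sup>2 - 2 * Re (cinner w (scaleC t z)) + (norm (scaleC t z))\<^sup>2"
      by (rule norm_diff_sq)
    also have "cinner w (scaleC t z) = t * cnj a"
      by (simp add: cinner_scaleC_right a_def cinner_commute[of z w])
    also have "Re (t * cnj a) = r * (cmod a)\<^sup>2"
      by (simp add: t_def mult.assoc complex_norm_square[symmetric])
    also have "(norm (scaleC t z))\<^sup>2 = r\<^sup>2 * (cmod a)\<^sup>2 * (norm z)\<^sup>2"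
      using r by (simp add: norm_scaleC t_def norm_mult power_mult_distrib)
    finally show ?thesis by simp
  qed
  have "(cmod a)\<^sup>2 = 0"
  proof (rule ccontr)
    assume "(cmod a)\<^sup>2 \<noteq> 0"
    then have pos: "(cmod a)\<^sup>2 > 0" by simp
    define r where "r = 1 / ((norm z)\<^sup>2 + 1)"
    have nz: "(norm z)\<^sup>2 + 1 > 0" by (intro add_nonneg_pos) auto
    then have r0: "r > 0" by (simp add: r_def)
    have rc: "r * (cmod a)\<^sup>2 > 0" using pos r0 by simp
    have "(r * (cmod a)\<^sup>2) * 2 \<le> (r * (cmod a)\<^sup>2) * (r * (norm z)\<^sup>2)"
      using ineq[OF r0] by (simp add: power2_eq_square mult_ac)
    then have "2 \<le> r * (norm z)\<^sup>2" by (rule mult_le_cancel_left_pos[THEN iffD1, OF rc])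
    moreover have "r * (norm z)\<^sup>2 < 1" using nz by (simp add: r_def)
    ultimately show False by simp
  qed
  then have "a = 0" by simp
  then show ?thesis unfolding w_def[symmetric] using a_def cinner_commute[of w z] by simp
qed

lemma proj_exists:
  fixes x :: "'a::chilbert_space"
  assumes "csub M" "closed M"
  shows "\<exists>y\<in>M. \<forall>z\<in>M. cinner (x - y) z = 0"
  using nearest_exists[OF assms, of x] nearest_orth[OF assms(1)] by blast

lemma proj_unique:
  fixes x :: "'a::chilbert_space"
  assumes "csub M" "y1 \<in> M" "\<forall>z\<in>M. cinner (x - y1) z = 0" "y2 \<in> M" "\<forall>z\<in>M. cinner (x - y2) z = 0"
  shows "y1 = y2"
proof -
  have "y2 - y1 \<in> M" using assms csub_diff by blast
  then have "cinner (x - y1) (y2 - y1) - cinner (x - y2) (y2 - y1) = 0" using assms by simp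
  then have "cinner (y2 - y1) (y2 - y1) = 0" by (simp add: cinner_diff_left[symmetric])
  then show ?thesis by (simp add: cinner_eq_zero_iff)
qed

lemma orth_proj_char:
  fixes x :: "'a::chilbert_space"
  assumes "csub M" "closed M"
  shows "orth_proj M x \<in> M" "\<forall>z\<in>M. cinner (x - orth_proj M x) z = 0"
proof -
  obtain y where y: "y \<in> M" "\<forall>z\<in>M. cinner (x - y) z = 0" using proj_exists[OF assms] by blast
  have "orth_proj M x = y" unfolding orth_proj_def
    by (rule the_equality) (use y proj_unique[OF assms(1)] in blast)+
  then show "orth_proj M x \<in> M" "\<forall>z\<in>M. cinner (x - orth_proj M x) z = 0" using y by auto
qed

lemma orth_proj_eq:
  fixes x :: "'a::chilbert_space"
  assumes "csub M" "closed M" "y \<in> M" "\<forall>z\<in>M. cinner (x - y) z = 0"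
  shows "orth_proj M x = y"
  using proj_unique[OF assms(1) orth_proj_char[OF assms(1,2)] assms(3,4)] by blast

section \<open>Riesz representation and adjoints\<close>

lemma riesz:
  fixes f :: "'a::chilbert_space \<Rightarrow> complex"
  assumes add: "\<And>x y. f (x + y) = f x + f y" and sc: "\<And>a x. f (scaleC a x) = a * f x"
    and bd: "\<And>x. cmod (f x) \<le> norm x * K"
  shows "\<exists>z. \<forall>x. f x = cinner z x"
proof (cases "\<forall>x. f x = 0")
  case True then show ?thesis by (intro exI[of _ 0]) simp
next
  case False
  then obtain u where u: "f u \<noteq> 0" by blast
  have f0: "f 0 = 0" using sc[of 0 0] by simp
  have fdiff: "f (x - y) = f x - f y" for x y
    using add[of "x - y" y] by simp
  have bl: "bounded_linear f"
    by (rule bounded_linear_intro[of _ K]) (auto simp: add sc scaleR_scaleC scaleR_conv_of_real bd)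
  define N where "N = {x. f x = 0}"
  have csN: "csub N" by (auto simp: csub_def N_def add sc f0)
  have clN: "closed N" unfolding N_def
    by (rule closed_Collect_eq) (auto intro: linear_continuous_on bl continuous_on_const)
  obtain y where y: "y \<in> N" "\<forall>z\<in>N. cinner (u - y) z = 0" using proj_exists[OF csN clN] by blast
  define w where "w = u - y"
  have fw: "f w = f u" using y(1) by (simp add: w_def fdiff N_def)
  have w0: "w \<noteq> 0" using fw u f0 by auto
  have ww: "cinner w w \<noteq> 0" using w0 by (simp add: cinner_eq_zero_iff)
  show ?thesis
  proof (intro exI allI)
    fix x
    have "x - scaleC (f x / f w) w \<in> N" using fw u by (simp add: N_def fdiff sc)
    then have "cinner w (x - scaleC (f x / f w) w) = 0" using y(2) by (simp add: w_def)
    then have "cinner w x = f x / f w * cinner w w" by (simp add: cinner_diff_right cinner_scaleC_right)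
    then have "f x = f w * cinner w x / cinner w w" using ww fw u by (simp add: field_simps)
    also have "\<dots> = cinner (scaleC (cnj (f w / cinner w w)) w) x"
      by (simp add: cinner_scaleC_left)
    finally show "f x = cinner (scaleC (cnj (f w / cinner w w)) w) x" .
  qed
qed

definition is_adj :: "('a::chilbert_space \<Rightarrow> 'a) \<Rightarrow> ('a \<Rightarrow> 'a) \<Rightarrow> bool" where
  "is_adj T S \<longleftrightarrow> (\<forall>x y. cinner (T x) y = cinner x (S y))"

lemma is_adj_unique: "is_adj T S \<Longrightarrow> is_adj T S' \<Longrightarrow> S = S'"
proof (rule ext)
  fix y assume "is_adj T S" "is_adj T S'"
  then have "\<And>z. cinner z (S y) = cinner z (S' y)" unfolding is_adj_def by metis
  then show "S y = S' y" by (rule cinner_ext_left)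
qed

lemma adj_eq: assumes "is_adj T S" shows "adj T = S"
  unfolding adj_def
proof (rule the_equality)
  show "\<forall>x y. cinner (T x) y = cinner x (S y)" using assms by (simp add: is_adj_def)
next
  fix S' assume "\<forall>x y. cinner (T x) y = cinner x (S' y)"
  then have "is_adj T S'" by (simp add: is_adj_def)
  then show "S' = S" using is_adj_unique[OF assms] by simp
qed

lemma adj_exists:
  fixes T :: "'a::chilbert_space \<Rightarrow> 'a"
  assumes T: "bounded_clinear T"
  shows "\<exists>S. is_adj T S"
proof -
  obtain K where K: "\<And>x. norm (T x) \<le> norm x * K" "K > 0" using bcl_bound[OF T] by blast
  have "\<exists>z. \<forall>x. cinner y (T x) = cinner z x" for y
  proof (rule riesz[where K="norm y * K"])
    fix x
    have "cmod (cinner y (T x)) \<le> norm y * norm (T x)" by (rule cinner_CS)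
    also have "\<dots> \<le> norm y * (norm x * K)" using K by (simp add: mult_left_mono)
    finally show "cmod (cinner y (T x)) \<le> norm x * (norm y * K)" by (simp add: mult_ac)
  qed (simp_all add: bcl_add[OF T] bcl_scaleC[OF T] cinner_add_right cinner_scaleC_right)
  then obtain S where S: "\<And>y x. cinner y (T x) = cinner (S y) x" by metis
  have "is_adj T S" unfolding is_adj_def
  proof (intro allI)
    fix x y show "cinner (T x) y = cinner x (S y)"
      by (simp add: cinner_commute[of "T x" y] S cinner_commute[of "S y" x])
  qed
  then show ?thesis by blast
qed

lemma is_adj_bcl:
  fixes T :: "'a::chilbert_space \<Rightarrow> 'a"
  assumes T: "bounded_clinear T" and S: "is_adj T S"
  shows "bounded_clinear S"
proof -
  obtain K where K: "\<And>x. norm (T x) \<le> norm x * K" "K > 0" using bcl_bound[OF T] by blast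
  have SS: "\<And>x y. cinner (T x) y = cinner x (S y)" using S by (simp add: is_adj_def)
  show ?thesis
  proof (rule bcl_intro[where K=K])
    fix x y show "S (x + y) = S x + S y"
      by (rule cinner_ext_left) (simp add: SS[symmetric] cinner_add_right)
  next
    fix a x show "S (scaleC a x) = scaleC a (S x)"
      by (rule cinner_ext_left) (simp add: SS[symmetric] cinner_scaleC_right)
  next
    fix y
    have "(norm (S y))\<^sup>2 = Re (cinner (S y) (S y))" by (simp add: Re_cinner_self)
    also have "\<dots> = Re (cinner (T (S y)) y)" by (simp add: SS)
    also have "\<dots> \<le> norm (T (S y)) * norm y" by (rule Re_cinner_le)
    also have "\<dots> \<le> norm (S y) * K * norm y" using K by (simp add: mult_right_mono)
    finally have "norm (S y) * norm (S y) \<le> norm (S y) * (norm y * K)"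
      by (simp add: power2_eq_square mult_ac)
    then show "norm (S y) \<le> norm y * K"
      using K(2) by (cases "norm (S y) = 0") (auto simp: mult_le_cancel_left)
  qed
qed

lemma adj_props:
  fixes T :: "'a::chilbert_space \<Rightarrow> 'a"
  assumes T: "bounded_clinear T"
  shows "is_adj T (adj T)" "bounded_clinear (adj T)" "\<And>x y. cinner (T x) y = cinner x (adj T y)"
proof -
  obtain S where S: "is_adj T S" using adj_exists[OF T] by blast
  then have "adj T = S" by (rule adj_eq)
  then show "is_adj T (adj T)" "bounded_clinear (adj T)" using S is_adj_bcl[OF T S] by auto
  then show "\<And>x y. cinner (T x) y = cinner x (adj T y)" by (simp add: is_adj_def)
qed

lemma adj_left:
  fixes T :: "'a::chilbert_space \<Rightarrow> 'a"
  assumes T: "bounded_clinear T"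
  shows "cinner (adj T x) y = cinner x (T y)"
  by (simp add: cinner_commute[of "adj T x" y] adj_props(3)[OF T, symmetric] cinner_commute[of "T y" x])

section \<open>Positivity and self-adjointness\<close>

definition selfadj :: "('a::chilbert_space \<Rightarrow> 'a) \<Rightarrow> bool" where
  "selfadj A \<longleftrightarrow> (\<forall>x y. cinner (A x) y = cinner x (A y))"

lemma selfadj_adj: "bounded_clinear A \<Longrightarrow> selfadj A \<Longrightarrow> adj A = A"
  by (simp add: adj_eq is_adj_def selfadj_def)

lemma real_form_selfadj:
  fixes A :: "'a::chilbert_space \<Rightarrow> 'a"
  assumes A: "bounded_clinear A" and im: "\<And>x. Im (cinner (A x) x) = 0"
  shows "selfadj A"
  unfolding selfadj_def
proof (intro allI)
  fix x y
  define a where "a = cinner (A x) y"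
  define b where "b = cinner (A y) x"
  have "cinner (A (x + y)) (x + y) = cinner (A x) x + a + b + cinner (A y) y"
    by (simp add: bcl_add[OF A] cinner_add_left cinner_add_right a_def b_def)
  then have 1: "Im a + Im b = 0" using im[of "x+y"] im[of x] im[of y] by simp
  have "cinner (A (x + scaleC \<i> y)) (x + scaleC \<i> y) = cinner (A x) x + \<i> * a - \<i> * b + cinner (A y) y"
    by (simp add: bcl_add[OF A] bcl_scaleC[OF A] cinner_add_left cinner_add_right
        cinner_scaleC_left cinner_scaleC_right a_def b_def ring_distribs)
  then have 2: "Re a - Re b = 0" using im[of "x + scaleC \<i> y"] im[of x] im[of y] by simp
  have "a = cnj b" using 1 2 by (simp add: complex_eq_iff)
  then show "cinner (A x) y = cinner x (A y)" by (simp add: a_def b_def cinner_commute[of x "A y"])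
qed

lemma positive_selfadj:
  "bounded_clinear A \<Longrightarrow> positive_op A \<Longrightarrow> selfadj A"
  by (rule real_form_selfadj) (auto simp: positive_op_def)

lemma quad_discr:
  fixes \<alpha> \<beta> \<gamma> :: real
  assumes "\<And>r. 0 \<le> \<alpha> + 2 * r * \<gamma> + r\<^sup>2 * \<beta>" "\<beta> \<ge> 0"
  shows "\<gamma>\<^sup>2 \<le> \<alpha> * \<beta>"
proof (cases "\<beta> = 0")
  case True
  have "\<gamma> = 0"
  proof (rule ccontr)
    assume g: "\<gamma> \<noteq> 0"
    have "0 \<le> \<alpha> + 2 * (- (\<bar>\<alpha>\<bar> + 1) / (2 * \<gamma>)) * \<gamma>" using assms(1)[of "- (\<bar>\<alpha>\<bar> + 1) / (2 * \<gamma>)"] True by simp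
    also have "\<dots> = \<alpha> - (\<bar>\<alpha>\<bar> + 1)" using g by (simp add: field_simps)
    finally show False by linarith
  qed
  then show ?thesis using True by simp
next
  case False
  then have b: "\<beta> > 0" using assms(2) by simp
  have "0 \<le> \<alpha> + 2 * (- \<gamma> / \<beta>) * \<gamma> + (- \<gamma> / \<beta>)\<^sup>2 * \<beta>" by (rule assms(1))
  also have "\<dots> = \<alpha> - \<gamma>\<^sup>2 / \<beta>" using b by (simp add: field_simps power2_eq_square)
  finally show ?thesis using b by (simp add: field_simps)
qed

lemma pos_CS:
  fixes A :: "'a::chilbert_space \<Rightarrow> 'a"
  assumes A: "bounded_clinear A" and pos: "positive_op A"
  shows "(cmod (cinner (A x) y))\<^sup>2 \<le> Re (cinner (A x) x) * Re (cinner (A y) y)"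
proof (cases "cinner (A x) y = 0")
  case True then show ?thesis using pos by (simp add: positive_op_def)
next
  case False
  define c where "c = cinner (A x) y"
  define u where "u = cnj c / complex_of_real (cmod c)"
  have cu: "cmod u = 1" using False by (simp add: u_def norm_divide c_def)
  have uc: "u * c = complex_of_real (cmod c)"
  proof -
    have "cnj c * c = complex_of_real ((cmod c)\<^sup>2)" by (metis complex_norm_square mult.commute)
    then show ?thesis using False by (simp add: u_def c_def power2_eq_square)
  qed
  have sa: "selfadj A" by (rule positive_selfadj[OF A pos])
  have uu: "cnj u * u = 1" using cu by (metis complex_norm_square mult.commute of_real_1 power_one)
  show ?thesis unfolding c_def[symmetric]
  proof (rule quad_discr)
    fix r :: real
    define s where "s = scaleC (complex_of_real r * u) y"
    have "0 \<le> Re (cinner (A (x + s)) (x + s))" using pos by (simp add: positive_op_def)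
    also have "cinner (A (x + s)) (x + s) = cinner (A x) x + cinner (A x) s + cinner (A s) x + cinner (A s) s"
      by (simp add: bcl_add[OF A] cinner_add_left cinner_add_right)
    also have "cinner (A x) s = complex_of_real (r * cmod c)"
      by (simp add: s_def cinner_scaleC_right c_def[symmetric] mult.assoc uc)
    also have "cinner (A s) x = complex_of_real (r * cmod c)"
    proof -
      have "cinner (A s) x = cinner s (A x)" using sa by (simp add: selfadj_def)
      also have "\<dots> = cnj (cinner (A x) s)" by (rule cinner_commute)
      also have "\<dots> = complex_of_real (r * cmod c)"
        by (simp add: s_def cinner_scaleC_right c_def[symmetric] mult.assoc uc)
      finally show ?thesis .
    qed
    also have "cinner (A s) s = complex_of_real (r\<^sup>2) * cinner (A y) y"
    proof -
      have "cinner (A s) s = cnj (complex_of_real r * u) * (complex_of_real r * u) * cinner (A y) y"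
        by (simp add: s_def bcl_scaleC[OF A] cinner_scaleC_left cinner_scaleC_right mult_ac)
      also have "cnj (complex_of_real r * u) * (complex_of_real r * u) = complex_of_real (r\<^sup>2)"
        using uu by (simp add: power2_eq_square mult_ac)
      finally show ?thesis .
    qed
    finally show "0 \<le> Re (cinner (A x) x) + 2 * r * cmod c + r\<^sup>2 * Re (cinner (A y) y)" by simp
  next
    show "0 \<le> Re (cinner (A y) y)" using pos by (simp add: positive_op_def)
  qed
qed

lemma pos_zero_form:
  fixes A :: "'a::chilbert_space \<Rightarrow> 'a"
  assumes A: "bounded_clinear A" and pos: "positive_op A" and z: "Re (cinner (A x) x) = 0"
  shows "A x = 0"
proof -
  have "(cmod (cinner (A x) (A x)))\<^sup>2 \<le> 0" using pos_CS[OF A pos, of x "A x"] z by simp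
  then show ?thesis by (simp add: cinner_eq_zero_iff)
qed



function sc :: "nat \<Rightarrow> real" where
  "sc n = (if n = 0 then 0 else if n = 1 then 1/2 else (\<Sum>k\<in>{1..<n}. sc k * sc (n - k)) / 2)"
  by auto
termination by (relation "Wellfounded.measure (\<lambda>n. n)") auto

declare sc.simps [simp del]

lemma sc_0 [simp]: "sc 0 = 0" by (simp add: sc.simps)
lemma sc_1 [simp]: "sc 1 = 1/2" by (simp add: sc.simps)
lemma sc_Suc0 [simp]: "sc (Suc 0) = 1/2" by (simp add: sc.simps)
lemma sc_rec: "n \<ge> 2 \<Longrightarrow> 2 * sc n = (\<Sum>k\<in>{1..<n}. sc k * sc (n - k))"
  by (subst sc.simps) simp

lemma sc_nonneg: "sc n \<ge> 0"
proof (induction n rule: less_induct)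
  case (less n)
  show ?case
  proof (cases "n \<ge> 2")
    case True
    have "(\<Sum>k\<in>{1..<n}. sc k * sc (n - k)) \<ge> 0"
      using less by (intro sum_nonneg mult_nonneg_nonneg) auto
    then show ?thesis using sc_rec[OF True] by simp
  next
    case False then have "n = 0 \<or> n = 1" by auto
    then show ?thesis by auto
  qed
qed

definition PS :: "nat \<Rightarrow> (nat \<times> nat) set" where
  "PS N = {(k, j). 1 \<le> k \<and> 1 \<le> j \<and> k + j < N}"

lemma PS_sub: "PS N \<subseteq> {..<N} \<times> {..<N}" by (auto simp: PS_def)
lemma finite_PS: "finite (PS N)" using PS_sub finite_subset by blast

lemma double_to_pairs:
  fixes g :: "nat \<Rightarrow> nat \<Rightarrow> 'b::comm_monoid_add"
  shows "(\<Sum>n\<in>{2..<N}. \<Sum>k\<in>{1..<n}. g k (n - k)) = (\<Sum>(k,j)\<in>PS N. g k j)"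
proof -
  have "(\<Sum>n\<in>{2..<N}. \<Sum>k\<in>{1..<n}. g k (n - k)) = (\<Sum>(n,k)\<in>Sigma {2..<N} (\<lambda>n. {1..<n}). g k (n - k))"
    by (rule sum.Sigma) auto
  also have "\<dots> = (\<Sum>(k,j)\<in>PS N. g k j)"
    by (rule sum.reindex_bij_witness[where i="\<lambda>(k,j). (k+j, k)" and j="\<lambda>(n,k). (k, n-k)"])
      (auto simp: PS_def)
  finally show ?thesis .
qed

definition ssum :: "nat \<Rightarrow> real" where "ssum N = (\<Sum>n<N. sc n)"

lemma ssum_sq: "(ssum N)\<^sup>2 = (\<Sum>(i,j)\<in>{..<N} \<times> {..<N}. sc i * sc j)"
  by (simp add: ssum_def power2_eq_square sum_product sum.cartesian_product)

lemma ssum_le1: "ssum N \<le> 1"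
proof (induction N)
  case 0 then show ?case by (simp add: ssum_def)
next
  case (Suc N)
  show ?case
  proof (cases "N = 0")
    case True then show ?thesis by (simp add: ssum_def)
  next
    case False
    have split: "{..<Suc N} = {0, 1} \<union> {2..<Suc N}" using False by auto
    have "ssum (Suc N) = sc 0 + sc 1 + (\<Sum>n\<in>{2..<Suc N}. sc n)"
      unfolding ssum_def split by (subst sum.union_disjoint) auto
    also have "(\<Sum>n\<in>{2..<Suc N}. sc n) = (\<Sum>n\<in>{2..<Suc N}. (\<Sum>k\<in>{1..<n}. sc k * sc (n - k)) / 2)"
    proof (rule sum.cong)
      fix n assume "n \<in> {2..<Suc N}"
      then show "sc n = (\<Sum>k\<in>{1..<n}. sc k * sc (n - k)) / 2" using sc_rec[of n] by simp
    qed simp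
    also have "\<dots> = (\<Sum>n\<in>{2..<Suc N}. \<Sum>k\<in>{1..<n}. sc k * sc (n - k)) / 2"
      by (rule sum_divide_distrib[symmetric])
    also have "(\<Sum>n\<in>{2..<Suc N}. \<Sum>k\<in>{1..<n}. sc k * sc (n - k)) = (\<Sum>(k,j)\<in>PS (Suc N). sc k * sc j)"
      by (rule double_to_pairs)
    also have "\<dots> \<le> (\<Sum>(k,j)\<in>{..<N} \<times> {..<N}. sc k * sc j)"
      by (rule sum_mono2) (auto simp: PS_def sc_nonneg)
    also have "\<dots> = (ssum N)\<^sup>2" by (simp add: ssum_sq)
    finally have "ssum (Suc N) \<le> 1/2 + (ssum N)\<^sup>2 / 2" by (simp add: divide_right_mono)
    moreover have "(ssum N)\<^sup>2 \<le> 1"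
      using Suc.IH by (simp add: abs_le_square_iff ssum_def sum_nonneg sc_nonneg power_le_one)
    ultimately show ?thesis by simp
  qed
qed

lemma ssum_nonneg: "ssum N \<ge> 0" by (simp add: ssum_def sum_nonneg sc_nonneg)

lemma ssum_mono: "M \<le> N \<Longrightarrow> ssum M \<le> ssum N"
  unfolding ssum_def by (rule sum_mono2) (auto simp: sc_nonneg)

lemma summable_sc: "summable sc"
  by (rule summableI_nonneg_bounded[where x=1]) (auto simp: sc_nonneg ssum_le1[unfolded ssum_def])

lemma ssum_conv: "ssum \<longlonglongrightarrow> suminf sc"
  unfolding ssum_def by (rule summable_LIMSEQ[OF summable_sc])

lemma ssum_gap: "(\<lambda>N. (ssum N)\<^sup>2 - (ssum (N div 2))\<^sup>2) \<longlonglongrightarrow> 0"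
proof -
  have "(\<lambda>N. ssum (N div 2)) \<longlonglongrightarrow> suminf sc"
    by (rule filterlim_compose[OF ssum_conv filterlim_at_top_div_const_nat]) simp
  then have "(\<lambda>N. (ssum N)\<^sup>2 - (ssum (N div 2))\<^sup>2) \<longlonglongrightarrow> (suminf sc)\<^sup>2 - (suminf sc)\<^sup>2"
    by (intro tendsto_intros ssum_conv)
  then show ?thesis by simp
qed



lemma scaleC_bounded_linear: "bounded_linear (\<lambda>x::'a::chilbert_space. scaleC a x)"
  by (rule bounded_linear_intro[of _ "cmod a"])
     (auto simp: scaleC_add_right scaleR_scaleC scaleC_scaleC mult.commute norm_scaleC)

lemma strong_lim_bcl:
  fixes F :: "nat \<Rightarrow> 'a::chilbert_space \<Rightarrow> 'a"
  assumes bcl: "\<And>N. bounded_clinear (F N)" and bd: "\<And>N x. norm (F N x) \<le> K * norm x"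
    and lim: "\<And>x. (\<lambda>N. F N x) \<longlonglongrightarrow> G x"
  shows "bounded_clinear G" "\<And>x. norm (G x) \<le> K * norm x"
proof -
  show nb: "\<And>x. norm (G x) \<le> K * norm x"
  proof -
    fix x
    have "(\<lambda>N. norm (F N x)) \<longlonglongrightarrow> norm (G x)" by (intro tendsto_intros lim)
    then show "norm (G x) \<le> K * norm x"
      by (rule tendsto_le[OF trivial_limit_sequentially tendsto_const]) (simp add: bd)
  qed
  show "bounded_clinear G"
  proof (rule bcl_intro[where K=K])
    fix x y
    have "(\<lambda>N. F N (x + y)) \<longlonglongrightarrow> G x + G y"
      unfolding bcl_add[OF bcl] by (intro tendsto_intros lim)
    then show "G (x + y) = G x + G y" using lim[of "x+y"] LIMSEQ_unique by blast
  next
    fix a x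
    have "(\<lambda>N. F N (scaleC a x)) \<longlonglongrightarrow> scaleC a (G x)"
      unfolding bcl_scaleC[OF bcl] by (rule bounded_linear.tendsto[OF scaleC_bounded_linear lim])
    then show "G (scaleC a x) = scaleC a (G x)" using lim[of "scaleC a x"] LIMSEQ_unique by blast
  next
    fix x show "norm (G x) \<le> norm x * K" using nb[of x] by (simp add: mult.commute)
  qed
qed

section \<open>Powers of a self-adjoint contraction\<close>

definition contr_sa :: "('a::chilbert_space \<Rightarrow> 'a) \<Rightarrow> bool" where
  "contr_sa X \<longleftrightarrow> bounded_clinear X \<and> selfadj X \<and> (\<forall>x. norm (X x) \<le> norm x)"

lemma pow_contr: "contr_sa X \<Longrightarrow> norm ((X ^^ n) x) \<le> norm x"
proof (induction n)
  case (Suc n)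
  then have "norm (X ((X ^^ n) x)) \<le> norm ((X ^^ n) x)" by (simp add: contr_sa_def)
  then show ?case using Suc by simp
qed simp

lemma pow_selfadj: "contr_sa X \<Longrightarrow> selfadj (X ^^ n)"
proof (induction n)
  case 0 then show ?case by (simp add: selfadj_def)
next
  case (Suc n)
  have X: "selfadj X" using Suc.prems by (simp add: contr_sa_def)
  show ?case unfolding selfadj_def
  proof (intro allI)
    fix x y
    have "cinner (X ((X ^^ n) x)) y = cinner ((X ^^ n) x) (X y)" using X by (simp add: selfadj_def)
    also have "\<dots> = cinner x ((X ^^ n) (X y))" using Suc by (simp add: selfadj_def)
    also have "(X ^^ n) (X y) = X ((X ^^ n) y)" by (simp add: funpow_swap1)
    finally show "cinner ((X ^^ Suc n) x) y = cinner x ((X ^^ Suc n) y)" by simp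
  qed
qed

lemma pow_add_app: "(X ^^ k) ((X ^^ j) x) = (X ^^ (k + j)) x"
  by (simp add: funpow_add)

lemma pow_commute:
  assumes "bounded_clinear Z" "\<And>x. Z (X x) = X (Z x)"
  shows "Z ((X ^^ n) x) = (X ^^ n) (Z x)"
  by (induction n) (simp_all add: assms)

definition Qp :: "('a::chilbert_space \<Rightarrow> 'a) \<Rightarrow> nat \<Rightarrow> 'a \<Rightarrow> 'a" where
  "Qp X N x = (\<Sum>n<N. sc n *\<^sub>R (X ^^ n) x)"

definition Sq :: "('a::chilbert_space \<Rightarrow> 'a) \<Rightarrow> 'a \<Rightarrow> 'a" where
  "Sq X x = (\<Sum>n. sc n *\<^sub>R (X ^^ n) x)"

lemma summable_Sq: "contr_sa X \<Longrightarrow> summable (\<lambda>n. sc n *\<^sub>R (X ^^ n) x)"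
proof (rule summable_comparison_test)
  assume X: "contr_sa X"
  show "\<exists>N. \<forall>n\<ge>N. norm (sc n *\<^sub>R (X ^^ n) x) \<le> sc n * norm x"
    using pow_contr[OF X] sc_nonneg by (auto intro!: mult_left_mono)
  show "summable (\<lambda>n. sc n * norm x)" by (intro summable_mult2 summable_sc)
qed

lemma Qp_lim: "contr_sa X \<Longrightarrow> (\<lambda>N. Qp X N x) \<longlonglongrightarrow> Sq X x"
  unfolding Qp_def Sq_def by (rule summable_LIMSEQ[OF summable_Sq])

lemma Qp_bcl: "contr_sa X \<Longrightarrow> bounded_clinear (Qp X N)"
  unfolding Qp_def[abs_def]
  by (intro bcl_sum_op bcl_scaleR_op bcl_funpow) (simp add: contr_sa_def)

lemma Qp_norm: "contr_sa X \<Longrightarrow> norm (Qp X N x) \<le> ssum N * norm x"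
proof -
  assume X: "contr_sa X"
  have "norm (Qp X N x) \<le> (\<Sum>n<N. norm (sc n *\<^sub>R (X ^^ n) x))" unfolding Qp_def by (rule norm_sum)
  also have "\<dots> \<le> (\<Sum>n<N. sc n * norm x)"
    using pow_contr[OF X] sc_nonneg by (intro sum_mono) (auto intro!: mult_left_mono)
  also have "\<dots> = ssum N * norm x" by (simp add: ssum_def sum_distrib_right)
  finally show ?thesis .
qed

lemma Qp_norm1: "contr_sa X \<Longrightarrow> norm (Qp X N x) \<le> 1 * norm x"
  using Qp_norm[of X N x] ssum_le1[of N] by (meson mult_right_mono norm_ge_zero order_trans)

lemma Sq_bcl: "contr_sa X \<Longrightarrow> bounded_clinear (Sq X)"
  using strong_lim_bcl(1)[OF Qp_bcl Qp_norm1 Qp_lim] by blast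

lemma Sq_norm: "contr_sa X \<Longrightarrow> norm (Sq X x) \<le> norm x"
  using strong_lim_bcl(2)[OF Qp_bcl Qp_norm1 Qp_lim] by fastforce

lemma Qp_selfadj: assumes X: "contr_sa X" shows "selfadj (Qp X N)"
proof -
  have p: "\<And>n x y. cinner ((X^^n) x) y = cinner x ((X^^n) y)" using pow_selfadj[OF X] by (simp add: selfadj_def)
  show ?thesis unfolding selfadj_def Qp_def
    by (simp add: cinner_sum_left cinner_sum_right cinner_scaleR_left cinner_scaleR_right p)
qed

lemma Sq_selfadj: "contr_sa X \<Longrightarrow> selfadj (Sq X)"
  unfolding selfadj_def
proof (intro allI)
  fix x y assume X: "contr_sa X"
  have "(\<lambda>N. cinner (Qp X N x) y) \<longlonglongrightarrow> cinner (Sq X x) y" by (intro tendsto_intros Qp_lim X)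
  moreover have "(\<lambda>N. cinner x (Qp X N y)) \<longlonglongrightarrow> cinner x (Sq X y)" by (intro tendsto_intros Qp_lim X)
  moreover have "cinner (Qp X N x) y = cinner x (Qp X N y)" for N
    using Qp_selfadj[OF X] by (simp add: selfadj_def)
  ultimately show "cinner (Sq X x) y = cinner x (Sq X y)" using LIMSEQ_unique by fastforce
qed

lemma Sq_commute:
  assumes X: "contr_sa X" and Z: "bounded_clinear Z" and c: "\<And>x. Z (X x) = X (Z x)"
  shows "Z (Sq X x) = Sq X (Z x)"
proof -
  have "Z (Qp X N x) = Qp X N (Z x)" for N
    unfolding Qp_def by (simp add: bcl_sum[OF Z] bcl_scaleR[OF Z] pow_commute[of Z X, OF Z c])
  moreover have "(\<lambda>N. Z (Qp X N x)) \<longlonglongrightarrow> Z (Sq X x)" by (rule bcl_cont[OF Z Qp_lim[OF X]])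
  moreover have "(\<lambda>N. Qp X N (Z x)) \<longlonglongrightarrow> Sq X (Z x)" by (rule Qp_lim[OF X])
  ultimately show ?thesis using LIMSEQ_unique by fastforce
qed

lemma Sq_regular:
  assumes X: "contr_sa X" and Y: "bounded_clinear Y" and Z: "bounded_clinear Z"
    and c: "\<And>x. Y (X x) = X (Y x)" and r: "\<And>x. Y (X (Z x)) = Y (Z (X x))"
  shows "Y (Sq X (Z x)) = Y (Z (Sq X x))"
proof -
  have pw: "Y ((X ^^ n) (Z x)) = Y (Z ((X ^^ n) x))" for n x
  proof (induction n arbitrary: x)
    case (Suc n)
    have "Y ((X ^^ Suc n) (Z x)) = X (Y ((X ^^ n) (Z x)))" by (simp add: c)
    also have "\<dots> = X (Y (Z ((X ^^ n) x)))" by (simp add: Suc)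
    also have "\<dots> = Y (Z (X ((X ^^ n) x)))" by (simp add: c[symmetric] r)
    also have "X ((X ^^ n) x) = (X ^^ Suc n) x" by simp
    finally show ?case .
  qed simp
  have "Y (Qp X N (Z x)) = Y (Z (Qp X N x))" for N
    unfolding Qp_def
    by (simp add: bcl_sum[OF Y] bcl_scaleR[OF Y] bcl_sum[OF Z] bcl_scaleR[OF Z] pw)
  moreover have "(\<lambda>N. Y (Qp X N (Z x))) \<longlonglongrightarrow> Y (Sq X (Z x))" by (rule bcl_cont[OF Y Qp_lim[OF X]])
  moreover have "(\<lambda>N. Y (Z (Qp X N x))) \<longlonglongrightarrow> Y (Z (Sq X x))"
    by (rule bcl_cont[OF Y bcl_cont[OF Z Qp_lim[OF X]]])
  ultimately show ?thesis using LIMSEQ_unique by fastforce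
qed

section \<open>The square identity\<close>

lemma QQ_expand:
  assumes X: "contr_sa X"
  shows "Qp X N (Qp X N x) = (\<Sum>(k,j)\<in>{..<N} \<times> {..<N}. (sc k * sc j) *\<^sub>R (X ^^ (k + j)) x)"
proof -
  have Xb: "bounded_clinear X" using X by (simp add: contr_sa_def)
  have "Qp X N (Qp X N x) = (\<Sum>k<N. sc k *\<^sub>R (X ^^ k) (\<Sum>j<N. sc j *\<^sub>R (X ^^ j) x))"
    by (simp add: Qp_def)
  also have "\<dots> = (\<Sum>k<N. \<Sum>j<N. (sc k * sc j) *\<^sub>R (X ^^ (k + j)) x)"
    by (simp add: bcl_sum[OF bcl_funpow[OF Xb]] bcl_scaleR[OF bcl_funpow[OF Xb]] scaleR_sum_right
        pow_add_app)
  also have "\<dots> = (\<Sum>(k,j)\<in>{..<N} \<times> {..<N}. (sc k * sc j) *\<^sub>R (X ^^ (k + j)) x)"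
    by (rule sum.cartesian_product)
  finally show ?thesis .
qed

lemma twoQ_expand:
  assumes X: "contr_sa X" and N: "N \<ge> 2"
  shows "2 *\<^sub>R Qp X N x - X x = (\<Sum>(k,j)\<in>PS N. (sc k * sc j) *\<^sub>R (X ^^ (k + j)) x)"
proof -
  have split: "{..<N} = {0, 1} \<union> {2..<N}" using N by auto
  have "2 *\<^sub>R Qp X N x = (\<Sum>n<N. (2 * sc n) *\<^sub>R (X ^^ n) x)"
    by (simp add: Qp_def scaleR_sum_right)
  also have "\<dots> = X x + (\<Sum>n\<in>{2..<N}. (2 * sc n) *\<^sub>R (X ^^ n) x)"
    unfolding split by (subst sum.union_disjoint) auto
  also have "(\<Sum>n\<in>{2..<N}. (2 * sc n) *\<^sub>R (X ^^ n) x)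
      = (\<Sum>n\<in>{2..<N}. \<Sum>k\<in>{1..<n}. (sc k * sc (n - k)) *\<^sub>R (X ^^ (k + (n - k))) x)"
  proof (rule sum.cong)
    fix n assume n: "n \<in> {2..<N}"
    have "(2 * sc n) *\<^sub>R (X ^^ n) x = (\<Sum>k\<in>{1..<n}. sc k * sc (n - k)) *\<^sub>R (X ^^ n) x"
      using sc_rec[of n] n by simp
    also have "\<dots> = (\<Sum>k\<in>{1..<n}. (sc k * sc (n - k)) *\<^sub>R (X ^^ n) x)"
      by (rule scaleR_sum_left)
    also have "\<dots> = (\<Sum>k\<in>{1..<n}. (sc k * sc (n - k)) *\<^sub>R (X ^^ (k + (n - k))) x)"
      by (intro sum.cong refl) simp
    finally show "(2 * sc n) *\<^sub>R (X ^^ n) x = (\<Sum>k\<in>{1..<n}. (sc k * sc (n - k)) *\<^sub>R (X ^^ (k + (n - k))) x)" .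
  qed simp
  also have "\<dots> = (\<Sum>(k,j)\<in>PS N. (sc k * sc j) *\<^sub>R (X ^^ (k + j)) x)"
    by (rule double_to_pairs[where g="\<lambda>k j. (sc k * sc j) *\<^sub>R (X ^^ (k + j)) x"])
  finally show ?thesis by simp
qed

lemma err_bound:
  assumes X: "contr_sa X" and N: "N \<ge> 2"
  shows "norm (Qp X N (Qp X N x) - (2 *\<^sub>R Qp X N x - X x)) \<le> ((ssum N)\<^sup>2 - (ssum (N div 2))\<^sup>2) * norm x"
proof -
  define f where "f = (\<lambda>(k,j). (sc k * sc j) *\<^sub>R (X ^^ (k + j)) x)"
  define g where "g = (\<lambda>(k::nat,j::nat). sc k * sc j)"
  define A where "A = {..<N} \<times> {..<N}"
  have fin: "finite A" by (simp add: A_def)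
  have sub: "PS N \<subseteq> A" using PS_sub by (simp add: A_def)
  have "Qp X N (Qp X N x) - (2 *\<^sub>R Qp X N x - X x) = sum f A - sum f (PS N)"
    by (simp add: QQ_expand[OF X] twoQ_expand[OF X N] f_def A_def)
  also have "\<dots> = sum f (A - PS N)" using sum.subset_diff[OF sub fin, of f] by simp
  finally have eq: "Qp X N (Qp X N x) - (2 *\<^sub>R Qp X N x - X x) = sum f (A - PS N)" .
  have "norm (sum f (A - PS N)) \<le> (\<Sum>p\<in>A - PS N. g p * norm x)"
  proof (rule sum_norm_le)
    fix p assume "p \<in> A - PS N"
    obtain k j where p: "p = (k, j)" by (cases p)
    show "norm (f p) \<le> g p * norm x"
      using pow_contr[OF X, of "k+j" x] sc_nonneg[of k] sc_nonneg[of j]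
      by (simp add: p f_def g_def mult_left_mono)
  qed
  also have "\<dots> = (sum g A - sum g (PS N)) * norm x"
    using sum.subset_diff[OF sub fin, of g] by (simp add: sum_distrib_right)
  finally have n1: "norm (sum f (A - PS N)) \<le> (sum g A - sum g (PS N)) * norm x" .
  have sA: "sum g A = (ssum N)\<^sup>2" by (simp add: ssum_sq A_def g_def)
  have "(ssum (N div 2))\<^sup>2 \<le> sum g (PS N)"
  proof -
    define h where "h = N div 2"
    have "(ssum h)\<^sup>2 = sum g ({..<h} \<times> {..<h})" by (simp add: ssum_sq g_def)
    also have "\<dots> = sum g ({1..<h} \<times> {1..<h})"
      by (rule sum.mono_neutral_right) (auto simp: g_def Suc_le_eq intro!: gr0I)
    also have "\<dots> \<le> sum g (PS N)"
      by (rule sum_mono2[OF finite_PS]) (auto simp: PS_def h_def g_def sc_nonneg)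
    finally show ?thesis by (simp add: h_def)
  qed
  then have "(sum g A - sum g (PS N)) * norm x \<le> ((ssum N)\<^sup>2 - (ssum (N div 2))\<^sup>2) * norm x"
    using sA by (intro mult_right_mono) auto
  then show ?thesis using eq n1 by simp
qed

lemma Sq_square:
  assumes X: "contr_sa X"
  shows "Sq X (Sq X x) = 2 *\<^sub>R Sq X x - X x"
proof -
  have Sb: "bounded_clinear (Sq X)" by (rule Sq_bcl[OF X])
  have lim1: "(\<lambda>N. Qp X N (Qp X N x)) \<longlonglongrightarrow> Sq X (Sq X x)"
  proof (rule Lim_transform)
    show "(\<lambda>N. Qp X N (Sq X x)) \<longlonglongrightarrow> Sq X (Sq X x)" by (rule Qp_lim[OF X])
    have "(\<lambda>N. Qp X N (Qp X N x - Sq X x)) \<longlonglongrightarrow> 0"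
    proof (rule Lim_null_comparison)
      show "\<forall>\<^sub>F N in sequentially. norm (Qp X N (Qp X N x - Sq X x)) \<le> norm (Qp X N x - Sq X x)"
        using Qp_norm1[OF X] by simp
      have "(\<lambda>N. Qp X N x - Sq X x) \<longlonglongrightarrow> 0"
        using Qp_lim[OF X, of x] by (simp add: LIM_zero)
      then show "(\<lambda>N. norm (Qp X N x - Sq X x)) \<longlonglongrightarrow> 0" by (simp add: tendsto_norm_zero)
    qed
    then show "(\<lambda>N. Qp X N (Qp X N x) - Qp X N (Sq X x)) \<longlonglongrightarrow> 0"
      by (simp add: bcl_diff[OF Qp_bcl[OF X]])
  qed
  have lim2: "(\<lambda>N. Qp X N (Qp X N x) - (2 *\<^sub>R Qp X N x - X x)) \<longlonglongrightarrow> 0"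
  proof (rule Lim_null_comparison)
    show "\<forall>\<^sub>F N in sequentially. norm (Qp X N (Qp X N x) - (2 *\<^sub>R Qp X N x - X x))
        \<le> ((ssum N)\<^sup>2 - (ssum (N div 2))\<^sup>2) * norm x"
      using eventually_ge_at_top[of "2::nat"] by (rule eventually_mono) (rule err_bound[OF X])
    show "(\<lambda>N. ((ssum N)\<^sup>2 - (ssum (N div 2))\<^sup>2) * norm x) \<longlonglongrightarrow> 0"
      using tendsto_mult[OF ssum_gap tendsto_const[of "norm x"]] by simp
  qed
  have lim3: "(\<lambda>N. 2 *\<^sub>R Qp X N x - X x) \<longlonglongrightarrow> 2 *\<^sub>R Sq X x - X x"
    by (intro tendsto_intros Qp_lim[OF X])
  have "(\<lambda>N. Qp X N (Qp X N x)) \<longlonglongrightarrow> 2 *\<^sub>R Sq X x - X x"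
    by (rule Lim_transform[OF lim3 lim2])
  then show ?thesis using lim1 LIMSEQ_unique by blast
qed



section \<open>Square roots of positive operators\<close>

lemma selfadj_real: "selfadj S \<Longrightarrow> Im (cinner (S x) x) = 0"
proof -
  assume "selfadj S"
  then have "cinner (S x) x = cinner x (S x)" by (simp add: selfadj_def)
  also have "\<dots> = cnj (cinner (S x) x)" by (rule cinner_commute)
  finally have "cinner (S x) x = cnj (cinner (S x) x)" .
  then show ?thesis by (metis cnj.sel(2) complex.expand neg_equal_zero)
qed

lemma pos_norm_sq:
  fixes Y :: "'a::chilbert_space \<Rightarrow> 'a"
  assumes Y: "bounded_clinear Y" "positive_op Y" and K: "\<And>x. norm (Y x) \<le> norm x * K" "K > 0"
  shows "(norm (Y x))\<^sup>2 \<le> K * Re (cinner (Y x) x)"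
proof (cases "Y x = 0")
  case True then show ?thesis using Y(2) K(2) by (simp add: positive_op_def)
next
  case False
  have cm: "cmod (cinner (Y x) (Y x)) = (norm (Y x))\<^sup>2" by (simp add: cinner_self norm_power)
  have "(cmod (cinner (Y x) (Y x)))\<^sup>2 \<le> Re (cinner (Y x) x) * Re (cinner (Y (Y x)) (Y x))"
    by (rule pos_CS[OF Y])
  then have "((norm (Y x))\<^sup>2)\<^sup>2 \<le> Re (cinner (Y x) x) * Re (cinner (Y (Y x)) (Y x))"
    by (simp only: cm)
  also have "Re (cinner (Y (Y x)) (Y x)) \<le> K * (norm (Y x))\<^sup>2"
  proof -
    have "Re (cinner (Y (Y x)) (Y x)) \<le> norm (Y (Y x)) * norm (Y x)" by (rule Re_cinner_le)
    also have "\<dots> \<le> norm (Y x) * K * norm (Y x)" using K by (simp add: mult_right_mono)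
    finally show ?thesis by (simp add: power2_eq_square mult_ac)
  qed
  then have "Re (cinner (Y x) x) * Re (cinner (Y (Y x)) (Y x)) \<le> Re (cinner (Y x) x) * (K * (norm (Y x))\<^sup>2)"
    using Y(2) by (intro mult_left_mono) (auto simp: positive_op_def)
  finally have "(norm (Y x))\<^sup>2 * (norm (Y x))\<^sup>2 \<le> (K * Re (cinner (Y x) x)) * (norm (Y x))\<^sup>2"
    by (simp add: power2_eq_square mult_ac)
  moreover have "(norm (Y x))\<^sup>2 > 0" using False by simp
  ultimately show ?thesis by (rule mult_right_le_imp_le)
qed

locale posop =
  fixes Y :: "'a::chilbert_space \<Rightarrow> 'a" and K :: real
  assumes Ybcl: "bounded_clinear Y" and Ypos: "positive_op Y"
    and Kb: "\<And>x. norm (Y x) \<le> norm x * K" and Kpos: "K > 0"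
begin

definition "Xo = (\<lambda>x. x - (1 / K) *\<^sub>R Y x)"
definition "Bo = (\<lambda>x. sqrt K *\<^sub>R (x - Sq Xo x))"

lemma Ysa: "selfadj Y" by (rule positive_selfadj[OF Ybcl Ypos])

lemma X_contr: "contr_sa Xo"
  unfolding contr_sa_def
proof (intro conjI allI)
  show "bounded_clinear Xo" unfolding Xo_def by (intro bcl_diff_op bcl_id bcl_scaleR_op Ybcl)
  show "selfadj Xo" using Ysa
    by (simp add: selfadj_def Xo_def cinner_diff_left cinner_diff_right cinner_scaleR_left cinner_scaleR_right)
  fix x
  define q where "q = Re (cinner (Y x) x)"
  have q0: "q \<ge> 0" using Ypos by (simp add: q_def positive_op_def)
  have yq: "(norm (Y x))\<^sup>2 \<le> K * q" unfolding q_def by (rule pos_norm_sq[OF Ybcl Ypos Kb Kpos])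
  have re: "Re (cinner x (Y x)) = q"
    unfolding q_def by (simp add: cinner_commute[of x "Y x"])
  have "(norm (Xo x))\<^sup>2 = (norm x)\<^sup>2 - 2 * Re (cinner x ((1/K) *\<^sub>R Y x)) + (norm ((1/K) *\<^sub>R Y x))\<^sup>2"
    unfolding Xo_def by (rule norm_diff_sq)
  also have "\<dots> = (norm x)\<^sup>2 - 2 * q / K + (norm (Y x))\<^sup>2 / K\<^sup>2"
  proof -
    have "Re (cinner x ((1/K) *\<^sub>R Y x)) = q / K" by (simp add: cinner_scaleR_right re)
    moreover have "(norm ((1/K) *\<^sub>R Y x))\<^sup>2 = (norm (Y x))\<^sup>2 / K\<^sup>2"
      using Kpos by (simp add: power_divide)
    ultimately show ?thesis by simp
  qed
  also have "\<dots> \<le> (norm x)\<^sup>2 - 2 * q / K + K * q / K\<^sup>2"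
    using yq Kpos by (intro add_left_mono divide_right_mono) auto
  also have "K * q / K\<^sup>2 = q / K" using Kpos by (simp add: power2_eq_square)
  also have "(norm x)\<^sup>2 - 2 * q / K + q / K = (norm x)\<^sup>2 - q / K" by simp
  also have "\<dots> \<le> (norm x)\<^sup>2" using q0 Kpos by simp
  finally have "(norm (Xo x))\<^sup>2 \<le> (norm x)\<^sup>2" .
  then show "norm (Xo x) \<le> norm x" by (rule power2_le_imp_le) simp
qed

lemma Sb: "bounded_clinear (Sq Xo)" by (rule Sq_bcl[OF X_contr])

lemma B_bcl: "bounded_clinear Bo"
  unfolding Bo_def by (intro bcl_scaleR_op bcl_diff_op bcl_id Sb)

lemma B_sq: "Bo (Bo x) = Y x"
proof -
  have "Bo (Bo x) = K *\<^sub>R (x - 2 *\<^sub>R Sq Xo x + Sq Xo (Sq Xo x))"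
    using Kpos by (simp add: Bo_def bcl_scaleR[OF Sb] bcl_diff[OF Sb] algebra_simps scaleR_2)
  also have "\<dots> = K *\<^sub>R (x - Xo x)" by (simp add: Sq_square[OF X_contr])
  also have "\<dots> = Y x" using Kpos by (simp add: Xo_def)
  finally show ?thesis .
qed

lemma B_pos: "positive_op Bo"
  unfolding positive_op_def
proof (intro allI conjI)
  fix x
  have Ssa: "selfadj (Sq Xo)" by (rule Sq_selfadj[OF X_contr])
  have eq: "cinner (Bo x) x = complex_of_real (sqrt K) * (cinner x x - cinner (Sq Xo x) x)"
    by (simp add: Bo_def cinner_scaleR_left cinner_diff_left)
  show "Im (cinner (Bo x) x) = 0" unfolding eq using selfadj_real[OF Ssa, of x] by simp
  have "Re (cinner (Sq Xo x) x) \<le> norm (Sq Xo x) * norm x" by (rule Re_cinner_le)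
  also have "\<dots> \<le> norm x * norm x" by (intro mult_right_mono Sq_norm[OF X_contr]) simp
  finally have "Re (cinner (Sq Xo x) x) \<le> (norm x)\<^sup>2" by (simp add: power2_eq_square)
  then have "0 \<le> sqrt K * ((norm x)\<^sup>2 - Re (cinner (Sq Xo x) x))"
    using Kpos by (intro mult_nonneg_nonneg) auto
  then show "0 \<le> Re (cinner (Bo x) x)" unfolding eq by (simp add: Re_cinner_self)
qed

lemma X_commute: "bounded_clinear Z \<Longrightarrow> (\<And>x. Z (Y x) = Y (Z x)) \<Longrightarrow> Z (Xo x) = Xo (Z x)"
  by (simp add: Xo_def bcl_diff bcl_scaleR)

lemma B_commute:
  assumes Z: "bounded_clinear Z" and c: "\<And>x. Z (Y x) = Y (Z x)"
  shows "Z (Bo x) = Bo (Z x)"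
proof -
  have cx: "\<And>x. Z (Xo x) = Xo (Z x)" using X_commute[OF Z] c by blast
  have "Z (Sq Xo x) = Sq Xo (Z x)" by (rule Sq_commute[of Xo Z, OF X_contr Z cx])
  then show ?thesis by (simp add: Bo_def bcl_scaleR[OF Z] bcl_diff[OF Z])
qed

lemma B_regular:
  assumes Z: "bounded_clinear Z" and r: "\<And>x. Y (Y (Z x)) = Y (Z (Y x))"
  shows "Y (Bo (Z x)) = Y (Z (Bo x))"
proof -
  have c: "\<And>x. Y (Xo x) = Xo (Y x)" by (rule X_commute[OF Ybcl]) simp
  have rx: "\<And>x. Y (Xo (Z x)) = Y (Z (Xo x))"
    by (simp add: Xo_def bcl_diff[OF Ybcl] bcl_diff[OF Z] bcl_scaleR[OF Ybcl] bcl_scaleR[OF Z] r)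
  have "Y (Sq Xo (Z x)) = Y (Z (Sq Xo x))" by (rule Sq_regular[of Xo Y Z, OF X_contr Ybcl Z c rx])
  then show ?thesis
    by (simp add: Bo_def bcl_scaleR[OF Ybcl] bcl_diff[OF Ybcl] bcl_scaleR[OF Z] bcl_diff[OF Z])
qed

lemma B_unique:
  assumes B': "bounded_clinear B'" "positive_op B'" "\<And>x. B' (B' x) = Y x"
  shows "B' x = Bo x"
proof -
  have Bsa: "selfadj Bo" by (rule positive_selfadj[OF B_bcl B_pos])
  have B'sa: "selfadj B'" by (rule positive_selfadj[OF B'(1,2)])
  have cY: "\<And>x. B' (Y x) = Y (B' x)" by (simp add: B'(3)[symmetric])
  have cB: "\<And>x. B' (Bo x) = Bo (B' x)" by (rule B_commute[of B', OF B'(1) cY])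
  define D where "D = (\<lambda>x. Bo x - B' x)"
  have Dsa: "cinner (D u) w = cinner u (D w)" for u w
    using Bsa B'sa by (simp add: D_def selfadj_def cinner_diff_left cinner_diff_right)
  have DD: "D (D x) = 0"
  proof -
    define y where "y = D x"
    have "Bo y + B' y = 0"
      by (simp add: y_def D_def bcl_diff[OF B_bcl] bcl_diff[OF B'(1)] B_sq B'(3) cB)
    then have "cinner (Bo y) y + cinner (B' y) y = 0" by (metis cinner_add_left cinner_zero_left)
    then have "Re (cinner (Bo y) y) + Re (cinner (B' y) y) = 0" by (metis plus_complex.sel(1) zero_complex.sel(1))
    moreover have "Re (cinner (Bo y) y) \<ge> 0" "Re (cinner (B' y) y) \<ge> 0"
      using B_pos B'(2) by (auto simp: positive_op_def)
    ultimately have "Re (cinner (Bo y) y) = 0" "Re (cinner (B' y) y) = 0" by linarith+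
    then have "Bo y = 0" "B' y = 0"
      using pos_zero_form[OF B_bcl B_pos] pos_zero_form[OF B'(1,2)] by auto
    then show ?thesis by (simp add: D_def y_def)
  qed
  have "cinner (D x) (D x) = 0" using Dsa[of x "D x"] DD by simp
  then show ?thesis by (simp add: cinner_eq_zero_iff D_def)
qed

lemma op_sqrt_eq: "op_sqrt Y = Bo"
  unfolding op_sqrt_def
proof (rule the_equality)
  show "bounded_clinear Bo \<and> positive_op Bo \<and> Bo \<circ> Bo = Y"
    using B_bcl B_pos B_sq by (auto simp: fun_eq_iff)
next
  fix B' assume "bounded_clinear B' \<and> positive_op B' \<and> B' \<circ> B' = Y"
  then show "B' = Bo" using B_unique by (auto simp: fun_eq_iff)
qed

end

lemma sqrt_facts:
  fixes Y :: "'a::chilbert_space \<Rightarrow> 'a"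
  assumes Y: "bounded_clinear Y" "positive_op Y"
  shows "bounded_clinear (op_sqrt Y)" "positive_op (op_sqrt Y)" "\<And>x. op_sqrt Y (op_sqrt Y x) = Y x"
    "\<And>Z x. bounded_clinear Z \<Longrightarrow> (\<And>x. Z (Y x) = Y (Z x)) \<Longrightarrow> Z (op_sqrt Y x) = op_sqrt Y (Z x)"
    "\<And>Z x. bounded_clinear Z \<Longrightarrow> (\<And>x. Y (Y (Z x)) = Y (Z (Y x))) \<Longrightarrow> Y (op_sqrt Y (Z x)) = Y (Z (op_sqrt Y x))"
proof -
  obtain K where K: "\<And>x. norm (Y x) \<le> norm x * K" "K > 0" using bcl_bound[OF Y(1)] by blast
  interpret posop Y K using Y K by unfold_locales auto
  show "bounded_clinear (op_sqrt Y)" "positive_op (op_sqrt Y)" "\<And>x. op_sqrt Y (op_sqrt Y x) = Y x"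
    "\<And>Z x. bounded_clinear Z \<Longrightarrow> (\<And>x. Z (Y x) = Y (Z x)) \<Longrightarrow> Z (op_sqrt Y x) = op_sqrt Y (Z x)"
    "\<And>Z x. bounded_clinear Z \<Longrightarrow> (\<And>x. Y (Y (Z x)) = Y (Z (Y x))) \<Longrightarrow> Y (op_sqrt Y (Z x)) = Y (Z (op_sqrt Y x))"
    unfolding op_sqrt_eq using B_bcl B_pos B_sq B_commute B_regular by auto
qed



section \<open>Inverses of bounded-below self-adjoint operators\<close>

lemma csub_range: "bounded_clinear G \<Longrightarrow> csub (range G)"
  unfolding csub_def
  by (auto simp: image_iff bcl_add[symmetric] bcl_scaleC[symmetric] intro: exI[of _ 0])

lemma inv_op:
  fixes G :: "'a::chilbert_space \<Rightarrow> 'a"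
  assumes G: "bounded_clinear G" "selfadj G" and c: "c > 0"
    and lb: "\<And>x. c * (norm x)\<^sup>2 \<le> Re (cinner (G x) x)"
  shows "\<And>x. G (inv G x) = x" "\<And>x. inv G (G x) = x" "bounded_clinear (inv G)"
    "selfadj (inv G)" "positive_op (inv G)" "\<And>x. c * norm (inv G x) \<le> norm x" "bij G"
proof -
  have sG: "\<And>a b. cinner (G a) b = cinner a (G b)" using G(2) by (simp add: selfadj_def)
  have lower: "c * norm x \<le> norm (G x)" for x
  proof (cases "x = 0")
    case False
    have "c * (norm x)\<^sup>2 \<le> norm (G x) * norm x" using lb[of x] Re_cinner_le[of "G x" x] by linarith
    then show ?thesis using False by (simp add: power2_eq_square mult_ac)
  qed simp
  have inj: "inj G"
  proof (rule injI)
    fix x y assume "G x = G y"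
    then have "G (x - y) = 0" by (simp add: bcl_diff[OF G(1)])
    then have "c * norm (x - y) \<le> 0" using lower[of "x - y"] by simp
    then show "x = y" using c by (simp add: mult_le_0_iff)
  qed
  have closedR: "closed (range G)"
  proof (unfold closed_sequential_limits, intro allI impI)
    fix y l assume h: "(\<forall>n. y n \<in> range G) \<and> y \<longlonglongrightarrow> l"
    have ex: "\<And>n. \<exists>z. y n = G z" using h by blast
    define x where "x n = (SOME z. y n = G z)" for n
    have x: "\<And>n. y n = G (x n)" using someI_ex[OF ex] by (simp add: x_def)
    have "Cauchy y" using h LIMSEQ_imp_Cauchy by blast
    have "Cauchy x"
    proof (unfold Cauchy_iff, intro allI impI)
      fix e :: real assume "e > 0"
      then obtain N where N: "\<And>m n. m \<ge> N \<Longrightarrow> n \<ge> N \<Longrightarrow> norm (y m - y n) < c * e"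
        using \<open>Cauchy y\<close> c unfolding Cauchy_iff by (meson mult_pos_pos)
      show "\<exists>M. \<forall>m\<ge>M. \<forall>n\<ge>M. norm (x m - x n) < e"
      proof (intro exI allI impI)
        fix m n assume "m \<ge> N" "n \<ge> N"
        have "c * norm (x m - x n) \<le> norm (G (x m - x n))" by (rule lower)
        also have "\<dots> = norm (y m - y n)" by (simp add: x bcl_diff[OF G(1)])
        also have "\<dots> < c * e" using N \<open>m \<ge> N\<close> \<open>n \<ge> N\<close> by blast
        finally show "norm (x m - x n) < e" using c by simp
      qed
    qed
    then obtain x0 where "x \<longlonglongrightarrow> x0" using Cauchy_convergent_iff convergent_def by blast
    then have "(\<lambda>n. G (x n)) \<longlonglongrightarrow> G x0" by (rule bcl_cont[OF G(1)])
    moreover have "(\<lambda>n. G (x n)) = y" by (simp add: x fun_eq_iff)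
    ultimately have "l = G x0" using h LIMSEQ_unique by auto
    then show "l \<in> range G" by simp
  qed
  have surj: "surj G"
  proof -
    have "y \<in> range G" for y
    proof -
      define p where "p = orth_proj (range G) y"
      have p: "p \<in> range G" "\<forall>z\<in>range G. cinner (y - p) z = 0"
        using orth_proj_char[OF csub_range[OF G(1)] closedR] by (auto simp: p_def)
      define r where "r = y - p"
      have "cinner r (G r) = 0" using p(2) by (simp add: r_def)
      then have "cinner (G r) r = 0" using G(2) by (simp add: selfadj_def)
      then have "c * (norm r)\<^sup>2 \<le> 0" using lb[of r] by simp
      then have "r = 0" using c by (simp add: mult_le_0_iff)
      then show ?thesis using p(1) by (simp add: r_def)
    qed
    then show ?thesis by blast
  qed
  show bij: "bij G" using inj surj by (simp add: bij_def)
  show GI: "\<And>x. G (inv G x) = x" using surj by (simp add: surj_f_inv_f)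
  show IG: "\<And>x. inv G (G x) = x" using inj by simp
  show lowI: "\<And>x. c * norm (inv G x) \<le> norm x"
  proof -
    fix x show "c * norm (inv G x) \<le> norm x" using lower[of "inv G x"] by (simp add: GI)
  qed
  show "bounded_clinear (inv G)"
  proof (rule bcl_intro[where K="1/c"])
    fix x y show "inv G (x + y) = inv G x + inv G y"
    proof (rule injD[OF inj])
      show "G (inv G (x + y)) = G (inv G x + inv G y)" by (simp add: GI bcl_add[OF G(1)])
    qed
  next
    fix a x show "inv G (scaleC a x) = scaleC a (inv G x)"
    proof (rule injD[OF inj])
      show "G (inv G (scaleC a x)) = G (scaleC a (inv G x))" by (simp add: GI bcl_scaleC[OF G(1)])
    qed
  next
    fix x show "norm (inv G x) \<le> norm x * (1 / c)" using lowI[of x] c by (simp add: field_simps)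
  qed
  show sa: "selfadj (inv G)" unfolding selfadj_def
  proof (intro allI)
    fix x y
    have "cinner (inv G x) y = cinner (inv G x) (G (inv G y))" by (simp only: GI)
    also have "\<dots> = cinner (G (inv G x)) (inv G y)" by (rule sG[symmetric])
    also have "\<dots> = cinner x (inv G y)" by (simp only: GI)
    finally show "cinner (inv G x) y = cinner x (inv G y)" .
  qed
  show "positive_op (inv G)" unfolding positive_op_def
  proof (intro allI conjI)
    fix x
    show "Im (cinner (inv G x) x) = 0" by (rule selfadj_real[OF sa])
    have "cinner (inv G x) x = cinner (inv G x) (G (inv G x))" by (simp only: GI)
    also have "\<dots> = cinner (G (inv G x)) (inv G x)" by (rule sG[symmetric])
    finally have "Re (cinner (inv G x) x) = Re (cinner (G (inv G x)) (inv G x))" by simp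
    moreover have "0 \<le> c * (norm (inv G x))\<^sup>2" using c by simp
    ultimately show "0 \<le> Re (cinner (inv G x) x)" using lb[of "inv G x"] by linarith
  qed
qed

section \<open>Orthogonal projections\<close>

lemma csub_closure:
  fixes M :: "'a::chilbert_space set"
  assumes "csub M" shows "csub (closure M)"
  unfolding csub_def
proof (intro conjI ballI allI)
  show "0 \<in> closure M" using assms closure_subset by (auto simp: csub_def)
next
  fix x y assume "x \<in> closure M" "y \<in> closure M"
  then obtain f g where f: "\<forall>n. f n \<in> M" "f \<longlonglongrightarrow> x" and g: "\<forall>n. g n \<in> M" "g \<longlonglongrightarrow> y"
    unfolding closure_sequential by blast
  have "\<forall>n. f n + g n \<in> M" using f g assms by (simp add: csub_def)
  moreover have "(\<lambda>n. f n + g n) \<longlonglongrightarrow> x + y" using f g by (intro tendsto_intros)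
  ultimately show "x + y \<in> closure M" unfolding closure_sequential
    by (intro exI[where x="\<lambda>n. f n + g n"] conjI)
next
  fix a x assume "x \<in> closure M"
  then obtain f where f: "\<forall>n. f n \<in> M" "f \<longlonglongrightarrow> x" unfolding closure_sequential by blast
  have "\<forall>n. scaleC a (f n) \<in> M" using f assms by (simp add: csub_def)
  moreover have "(\<lambda>n. scaleC a (f n)) \<longlonglongrightarrow> scaleC a x"
    by (rule bounded_linear.tendsto[OF scaleC_bounded_linear f(2)])
  ultimately show "scaleC a x \<in> closure M" unfolding closure_sequential
    by (intro exI[where x="\<lambda>n. scaleC a (f n)"] conjI)
qed

lemma proj_facts:
  fixes M :: "'a::chilbert_space set"
  assumes M: "csub M" "closed M"
  shows "\<And>a. a \<in> M \<Longrightarrow> orth_proj M a = a"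
    "\<And>a. (\<forall>z\<in>M. cinner a z = 0) \<Longrightarrow> orth_proj M a = 0"
    "\<And>a b. orth_proj M (a - b) = orth_proj M a - orth_proj M b"
    "\<And>a. orth_proj M a \<in> M"
    "\<And>a. norm (orth_proj M a) \<le> norm a"
proof -
  note ch = orth_proj_char[OF M]
  show "\<And>a. a \<in> M \<Longrightarrow> orth_proj M a = a" by (rule orth_proj_eq[OF M]) auto
  show "\<And>a. (\<forall>z\<in>M. cinner a z = 0) \<Longrightarrow> orth_proj M a = 0"
    by (rule orth_proj_eq[OF M]) (use M in \<open>auto simp: csub_def\<close>)
  show "\<And>a b. orth_proj M (a - b) = orth_proj M a - orth_proj M b"
  proof (rule orth_proj_eq[OF M])
    fix a b
    show "orth_proj M a - orth_proj M b \<in> M" using ch csub_diff[OF M(1)] by blast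
    show "\<forall>z\<in>M. cinner (a - b - (orth_proj M a - orth_proj M b)) z = 0"
    proof
      fix z assume "z \<in> M"
      have "a - b - (orth_proj M a - orth_proj M b) = (a - orth_proj M a) - (b - orth_proj M b)" by simp
      then show "cinner (a - b - (orth_proj M a - orth_proj M b)) z = 0"
        using ch(2)[of a] ch(2)[of b] \<open>z \<in> M\<close> by (simp add: cinner_diff_left)
    qed
  qed
  show "\<And>a. orth_proj M a \<in> M" using ch by blast
  show "\<And>a. norm (orth_proj M a) \<le> norm a"
  proof -
    fix a
    define p where "p = orth_proj M a"
    have "cinner (a - p) p = 0" using ch unfolding p_def by blast
    then have "(norm a)\<^sup>2 = (norm p)\<^sup>2 + (norm (a - p))\<^sup>2"
      using norm_add_sq[of p "a - p"] cinner_commute[of p "a - p"] by simp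
    then have "(norm p)\<^sup>2 \<le> (norm a)\<^sup>2" by simp
    then show "norm (orth_proj M a) \<le> norm a" unfolding p_def by (rule power2_le_imp_le) simp
  qed
qed

lemma proj_continuous:
  fixes M :: "'a::chilbert_space set"
  assumes M: "csub M" "closed M"
  shows "continuous_on S (orth_proj M)"
proof -
  have "bounded_linear (orth_proj M)"
  proof (rule bounded_linear_intro[where K=1])
    fix x y
    have "orth_proj M (x - (- y)) = orth_proj M x - orth_proj M (- y)" by (rule proj_facts(3)[OF M])
    moreover have "orth_proj M (0 - y) = orth_proj M 0 - orth_proj M y" by (rule proj_facts(3)[OF M])
    moreover have "orth_proj M 0 = 0" using proj_facts(1)[OF M, of 0] M by (simp add: csub_def)
    ultimately show "orth_proj M (x + y) = orth_proj M x + orth_proj M y" by simp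
  next
    fix r x show "orth_proj M (r *\<^sub>R x) = r *\<^sub>R orth_proj M x"
    proof (rule orth_proj_eq[OF M])
      show "r *\<^sub>R orth_proj M x \<in> M" using proj_facts(4)[OF M] csub_scaleR[OF M(1)] by blast
      have e: "r *\<^sub>R x - r *\<^sub>R orth_proj M x = r *\<^sub>R (x - orth_proj M x)" by (rule scaleR_diff_right[symmetric])
      show "\<forall>z\<in>M. cinner (r *\<^sub>R x - r *\<^sub>R orth_proj M x) z = 0"
        unfolding e using orth_proj_char(2)[OF M, of x] by (simp add: cinner_scaleR_left)
    qed
  next
    fix x show "norm (orth_proj M x) \<le> norm x * 1" using proj_facts(5)[OF M] by simp
  qed
  then show ?thesis by (rule linear_continuous_on)
qed

definition kperp :: "('a::chilbert_space \<Rightarrow> 'a) \<Rightarrow> 'a set" where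
  "kperp Y = {w. \<forall>z. Y z = 0 \<longrightarrow> cinner z w = 0}"

lemma closed_kperp: "closed (kperp Y)"
proof -
  have "kperp Y = (\<Inter>z\<in>{z. Y z = 0}. {w. cinner z w = 0})" by (auto simp: kperp_def)
  also have "closed \<dots>"
    by (intro closed_INT ballI closed_Collect_eq continuous_on_cinner continuous_on_const continuous_on_id)
  finally show ?thesis .
qed

lemma closure_range_selfadj:
  fixes B :: "'a::chilbert_space \<Rightarrow> 'a"
  assumes B: "bounded_clinear B" "selfadj B"
  shows "closure (range B) = kperp B"
proof
  show "closure (range B) \<subseteq> kperp B"
  proof (rule closure_minimal[OF _ closed_kperp])
    show "range B \<subseteq> kperp B" unfolding kperp_def
    proof (safe)
      fix u z assume "B z = 0"
      have "cinner z (B u) = cinner (B z) u" using B(2) by (simp add: selfadj_def)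
      then show "cinner z (B u) = 0" using \<open>B z = 0\<close> by simp
    qed
  qed
next
  show "kperp B \<subseteq> closure (range B)"
  proof
    fix w assume w: "w \<in> kperp B"
    define M where "M = closure (range B)"
    have M: "csub M" "closed M" unfolding M_def by (auto intro: csub_closure csub_range B(1))
    define p where "p = orth_proj M w"
    define r where "r = w - p"
    have p: "p \<in> M" "\<forall>z\<in>M. cinner r z = 0" using orth_proj_char[OF M] by (auto simp: p_def r_def)
    have "B u \<in> M" for u using closure_subset[of "range B"] by (auto simp: M_def)
    then have "cinner r (B u) = 0" for u using p(2) by blast
    then have "cinner (B r) u = 0" for u using B(2) by (simp add: selfadj_def)
    then have "B r = 0" by (metis cinner_eq_zero_iff)
    then have "cinner r w = 0" using w by (simp add: kperp_def)
    moreover have "cinner r p = 0" using p by blast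
    ultimately have "cinner r r = 0" by (simp add: r_def cinner_diff_right)
    then have "w = p" by (simp add: cinner_eq_zero_iff r_def)
    then show "w \<in> closure (range B)" using p(1) by (simp add: M_def)
  qed
qed

lemma csub_kperp: "csub (kperp Y)"
  by (auto simp: csub_def kperp_def cinner_add_right cinner_scaleC_right)

section \<open>Regularity\<close>

lemma sqrt_kernel:
  fixes Y :: "'a::chilbert_space \<Rightarrow> 'a"
  assumes Y: "bounded_clinear Y" "positive_op Y"
  shows "op_sqrt Y x = 0 \<longleftrightarrow> Y x = 0"
    "cinner (Y x) x = complex_of_real ((norm (op_sqrt Y x))\<^sup>2)"
proof -
  note sf = sqrt_facts[OF Y]
  have sa: "selfadj (op_sqrt Y)" by (rule positive_selfadj[OF sf(1,2)])
  show f: "cinner (Y x) x = complex_of_real ((norm (op_sqrt Y x))\<^sup>2)"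
  proof -
    have "cinner (Y x) x = cinner (op_sqrt Y (op_sqrt Y x)) x" by (simp add: sf(3))
    also have "\<dots> = cinner (op_sqrt Y x) (op_sqrt Y x)" using sa by (simp add: selfadj_def)
    finally show ?thesis by (simp add: cinner_self)
  qed
  show "op_sqrt Y x = 0 \<longleftrightarrow> Y x = 0"
  proof
    assume "op_sqrt Y x = 0" then show "Y x = 0" using sf(3)[of x] bcl_zero[OF sf(1)] by simp
  next
    assume "Y x = 0" then show "op_sqrt Y x = 0" using f by simp
  qed
qed

lemma kperp_sqrt:
  fixes Y :: "'a::chilbert_space \<Rightarrow> 'a"
  assumes Y: "bounded_clinear Y" "positive_op Y"
  shows "closure (range (op_sqrt Y)) = kperp Y"
proof -
  note sf = sqrt_facts[OF Y]
  have sa: "selfadj (op_sqrt Y)" by (rule positive_selfadj[OF sf(1,2)])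
  have "closure (range (op_sqrt Y)) = kperp (op_sqrt Y)" by (rule closure_range_selfadj[OF sf(1) sa])
  also have "\<dots> = kperp Y" by (simp add: kperp_def sqrt_kernel[OF Y])
  finally show ?thesis .
qed

lemma regular_iff:
  fixes Y Z :: "'a::chilbert_space \<Rightarrow> 'a"
  assumes Y: "bounded_clinear Y" "positive_op Y" and Z: "bounded_clinear Z"
  shows "regular_op Y Z \<longleftrightarrow> (\<forall>x. Y (Y (Z x)) = Y (Z (Y x)))"
proof -
  note sf = sqrt_facts[OF Y]
  define B where "B = op_sqrt Y"
  have BB: "\<And>x. B (B x) = Y x" using sf(3) by (simp add: B_def)
  have reg: "regular_op Y Z \<longleftrightarrow> (\<forall>x. Y (Z x) = B (Z (B x)))"
    by (simp add: regular_op_def B_def fun_eq_iff)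
  show ?thesis unfolding reg
  proof
    assume h: "\<forall>x. Y (Z x) = B (Z (B x))"
    show "\<forall>x. Y (Y (Z x)) = Y (Z (Y x))"
    proof
      fix x
      have "Y (Y (Z x)) = Y (B (Z (B x)))" by (simp only: h[rule_format, of x])
      also have "\<dots> = B (B (B (Z (B x))))" by (simp only: BB[symmetric])
      also have "B (B (Z (B x))) = Y (Z (B x))" by (simp only: BB)
      also have "Y (Z (B x)) = B (Z (B (B x)))" by (simp only: h[rule_format])
      also have "B (B (Z (B (B x)))) = Y (Z (Y x))" by (simp only: BB)
      finally show "Y (Y (Z x)) = Y (Z (Y x))" .
    qed
  next
    assume h: "\<forall>x. Y (Y (Z x)) = Y (Z (Y x))"
    show "\<forall>x. Y (Z x) = B (Z (B x))"
    proof
      fix x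
      have "Y (B (Z x)) = Y (Z (B x))" unfolding B_def by (rule sf(5)[OF Z]) (use h in blast)
      then have "Y (B (Z x) - Z (B x)) = 0" by (simp add: bcl_diff[OF Y(1)])
      then have "B (B (Z x) - Z (B x)) = 0" unfolding B_def by (simp add: sqrt_kernel[OF Y])
      then show "Y (Z x) = B (Z (B x))"
        using sf(1) by (simp add: bcl_diff B_def[symmetric] BB[symmetric])
    qed
  qed
qed

lemma reg_proj:
  fixes Y Z :: "'a::chilbert_space \<Rightarrow> 'a"
  assumes Y: "bounded_clinear Y" "positive_op Y" and Z: "bounded_clinear Z" and r: "regular_op Y Z"
  shows "op_sqrt Y (Z x) = orth_proj (kperp Y) (Z (op_sqrt Y x))"
proof -
  note sf = sqrt_facts[OF Y]
  define B where "B = op_sqrt Y"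
  define M where "M = kperp Y"
  have M: "csub M" "closed M" by (auto simp: M_def csub_kperp closed_kperp)
  have h: "B (B (Z x)) = B (Z (B x))"
    using r sf(3) by (simp add: regular_op_def fun_eq_iff B_def)
  then have "B (B (Z x) - Z (B x)) = 0" using sf(1) by (simp add: bcl_diff B_def)
  then have k: "Y (B (Z x) - Z (B x)) = 0" by (simp add: B_def sqrt_kernel[OF Y])
  have "orth_proj M (B (Z x) - Z (B x)) = 0"
    by (rule proj_facts(2)[OF M]) (use k in \<open>auto simp: M_def kperp_def\<close>)
  moreover have "B (Z x) \<in> M"
    using closure_subset[of "range (op_sqrt Y)"] kperp_sqrt[OF Y] by (auto simp: M_def B_def)
  ultimately show ?thesis
    using proj_facts(1,3)[OF M] by (simp add: B_def[symmetric] M_def[symmetric])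
qed

lemma reg_transfer:
  fixes T W R Q :: "'a::chilbert_space \<Rightarrow> 'a"
  assumes T: "bounded_clinear T" and W: "bounded_clinear W" and R: "bounded_clinear R"
    and RQ: "\<And>x. R (Q x) = x" and QR: "\<And>x. Q (R x) = x" and Qd: "\<And>x. Q x = x + s *\<^sub>R W x"
    and reg: "\<And>x. W (W (T x)) = W (T (W x))"
  shows "\<And>x. R (W (R (W (T (R x))))) = R (W (T (R (R (W x)))))"
proof -
  have WQ: "W (Q x) = Q (W x)" for x by (simp add: Qd bcl_add[OF W] bcl_scaleR[OF W])
  have WR: "W (R x) = R (W x)" for x by (metis RQ QR WQ)
  have K1: "W (T (R x)) = R (W (T x))" for x
  proof -
    define u where "u = R x"
    have xu: "x = Q u" by (simp add: u_def QR)
    have "R (T x) - T (R x) = R (T (Q u) - Q (T u))"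
      by (simp add: xu RQ bcl_diff[OF R] u_def[symmetric])
    also have "T (Q u) - Q (T u) = s *\<^sub>R (T (W u) - W (T u))"
      by (simp add: Qd bcl_add[OF T] bcl_scaleR[OF T] algebra_simps)
    finally have "W (R (T x) - T (R x)) = s *\<^sub>R R (W (T (W u)) - W (W (T u)))"
      by (simp add: bcl_scaleR[OF R] bcl_scaleR[OF W] WR bcl_diff[OF W] bcl_zero[OF R])
    also have "\<dots> = 0" by (simp add: reg bcl_zero[OF R])
    finally have "W (R (T x)) = W (T (R x))" by (simp add: bcl_diff[OF W])
    then show ?thesis by (simp add: WR)
  qed
  fix x
  have "R (W (R (W (T (R x))))) = R (R (W (W (T (R x)))))" by (simp add: WR)
  also have "\<dots> = R (R (W (T (W (R x)))))" by (simp add: reg)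
  also have "\<dots> = R (R (R (W (T (W x)))))" by (simp add: WR K1)
  also have "\<dots> = R (W (T (R (R (W x)))))" by (simp add: K1)
  finally show "R (W (R (W (T (R x))))) = R (W (T (R (R (W x)))))" .
qed



lemma adj_in:
  fixes T :: "'a::chilbert_space \<Rightarrow> 'a"
  assumes "bounded_clinear T"
  shows "cinner (adj T (T x)) y = cinner (T x) (T y)"
  by (rule adj_left[OF assms])

lemma form_AT:
  fixes T :: "'a::chilbert_space \<Rightarrow> 'a"
  assumes T: "bounded_clinear T"
  shows "cinner (adj T (T x) - x) x = complex_of_real ((norm (T x))\<^sup>2 - (norm x)\<^sup>2)"
    "cinner (x - adj T (T x)) x = complex_of_real ((norm x)\<^sup>2 - (norm (T x))\<^sup>2)"
  by (simp_all add: cinner_diff_left adj_in[OF T] cinner_self)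

lemma positive_of_form:
  fixes Y :: "'a::chilbert_space \<Rightarrow> 'a"
  assumes "\<And>x. cinner (Y x) x = complex_of_real (f x)" "\<And>x. f x \<ge> 0"
  shows "positive_op Y"
  using assms by (simp add: positive_op_def)

lemma AT_selfadj:
  fixes T :: "'a::chilbert_space \<Rightarrow> 'a"
  assumes T: "bounded_clinear T"
  shows "selfadj (\<lambda>x. adj T (T x))"
  unfolding selfadj_def
proof (intro allI)
  fix x y
  have "cinner x (adj T (T y)) = cnj (cinner (adj T (T y)) x)" by (rule cinner_commute)
  also have "\<dots> = cnj (cinner (T y) (T x))" by (simp add: adj_in[OF T])
  also have "\<dots> = cinner (T x) (T y)" by (simp add: cinner_commute[of "T x" "T y"])
  finally show "cinner (adj T (T x)) y = cinner x (adj T (T y))" by (simp add: adj_in[OF T])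
qed

lemma AT_bcl: "bounded_clinear T \<Longrightarrow> bounded_clinear (\<lambda>x. adj T (T x))"
  using bcl_comp[OF adj_props(2)] by blast

lemma normsq_AT:
  fixes T :: "'a::chilbert_space \<Rightarrow> 'a"
  assumes T: "bounded_clinear T"
  shows "Re (cinner (adj T (T x)) x) = (norm (T x))\<^sup>2"
  by (simp add: adj_in[OF T] Re_cinner_self)

lemma adj_contr:
  fixes C :: "'a::chilbert_space \<Rightarrow> 'a"
  assumes C: "bounded_clinear C" and c: "\<And>x. norm (C x) \<le> norm x"
  shows "norm (adj C w) \<le> norm w"
proof -
  have "(norm (adj C w))\<^sup>2 = Re (cinner (adj C w) (adj C w))" by (simp add: Re_cinner_self)
  also have "\<dots> = Re (cinner w (C (adj C w)))" by (simp add: adj_left[OF C])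
  also have "\<dots> \<le> norm w * norm (C (adj C w))" by (rule Re_cinner_le)
  also have "\<dots> \<le> norm w * norm (adj C w)" by (intro mult_left_mono c) simp
  finally have "norm (adj C w) * norm (adj C w) \<le> norm w * norm (adj C w)" by (simp add: power2_eq_square)
  then show ?thesis by (cases "norm (adj C w) = 0") (auto simp: mult_le_cancel_right)
qed

lemma expansive:
  fixes T :: "'a::chilbert_space \<Rightarrow> 'a"
  assumes cv: "\<And>x. (norm (T (T x)))\<^sup>2 - 2 * (norm (T x))\<^sup>2 + (norm x)\<^sup>2 \<le> 0"
  shows "norm x \<le> norm (T x)"
proof -
  define q where "q y = (norm (T y))\<^sup>2 - (norm y)\<^sup>2" for y
  have qT: "q (T y) \<le> q y" for y using cv[of y] by (simp add: q_def)
  have i: "q ((T ^^ k) x) \<le> q x" for k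
  proof (induction k)
    case (Suc k)
    have "q ((T ^^ Suc k) x) = q (T ((T ^^ k) x))" by simp
    also have "\<dots> \<le> q ((T ^^ k) x)" by (rule qT)
    finally show ?case using Suc by simp
  qed simp
  have ii: "(norm ((T ^^ n) x))\<^sup>2 \<le> (norm x)\<^sup>2 + real n * q x" for n
  proof (induction n)
    case (Suc n)
    have "(norm ((T ^^ Suc n) x))\<^sup>2 = (norm ((T ^^ n) x))\<^sup>2 + q ((T ^^ n) x)" by (simp add: q_def)
    also have "\<dots> \<le> (norm x)\<^sup>2 + real n * q x + q x" using Suc i[of n] by linarith
    finally show ?case by (simp add: algebra_simps)
  qed simp
  have "q x \<ge> 0"
  proof (rule ccontr)
    assume "\<not> q x \<ge> 0"
    then have "- q x > 0" by simp
    then obtain n where n: "(norm x)\<^sup>2 < real n * (- q x)" using reals_Archimedean3 by blast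
    have "0 \<le> (norm ((T ^^ n) x))\<^sup>2" by simp
    also have "\<dots> \<le> (norm x)\<^sup>2 + real n * q x" by (rule ii)
    finally show False using n by simp
  qed
  then have "(norm x)\<^sup>2 \<le> (norm (T x))\<^sup>2" by (simp add: q_def)
  then show ?thesis by (rule power2_le_imp_le) simp
qed

lemma concave_iff:
  fixes T :: "'a::chilbert_space \<Rightarrow> 'a"
  assumes T: "bounded_clinear T"
  shows "concave_op T \<longleftrightarrow> (\<forall>x. (norm (T (T x)))\<^sup>2 - 2 * (norm (T x))\<^sup>2 + (norm x)\<^sup>2 \<le> 0)"
proof -
  define f where "f x = (norm (T (T x)))\<^sup>2 - 2 * (norm (T x))\<^sup>2 + (norm x)\<^sup>2" for x
  have e: "cinner (0 - (adj T (adj T (T (T x))) - 2 *\<^sub>R adj T (T x) + x)) x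
     = complex_of_real (- f x)" for x
    by (simp add: f_def cinner_diff_left cinner_add_left cinner_scaleR_left adj_left[OF T] cinner_self
        cinner_minus_left)
  have "concave_op T \<longleftrightarrow> (\<forall>x. f x \<le> 0)" unfolding concave_op_def op_le_def positive_op_def e by simp
  then show ?thesis by (simp add: f_def)
qed

lemma hyper_iff:
  fixes C :: "'a::chilbert_space \<Rightarrow> 'a"
  assumes C: "bounded_clinear C"
  shows "hypercontraction2 C \<longleftrightarrow> (\<forall>x. norm (C x) \<le> norm x) \<and>
     (\<forall>x. 0 \<le> (norm x)\<^sup>2 - 2 * (norm (C x))\<^sup>2 + (norm (C (C x)))\<^sup>2)"
proof -
  have e1: "cinner (x - adj C (C x)) x = complex_of_real ((norm x)\<^sup>2 - (norm (C x))\<^sup>2)" for x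
    by (rule form_AT(2)[OF C])
  have e2: "cinner (x - 2 *\<^sub>R adj C (C x) + adj C (adj C (C (C x)))) x
     = complex_of_real ((norm x)\<^sup>2 - 2 * (norm (C x))\<^sup>2 + (norm (C (C x)))\<^sup>2)" for x
    by (simp add: cinner_diff_left cinner_add_left cinner_scaleR_left adj_left[OF C] cinner_self)
  have n: "(norm x)\<^sup>2 - (norm (C x))\<^sup>2 \<ge> 0 \<longleftrightarrow> norm (C x) \<le> norm x" for x
    by (simp add: abs_le_square_iff[symmetric])
  show ?thesis unfolding hypercontraction2_def positive_op_def e1 e2 using n by auto
qed

lemma kperp_cong: "(\<And>x. Y x = 0 \<longleftrightarrow> Y' x = 0) \<Longrightarrow> kperp Y = kperp Y'"
  by (simp add: kperp_def)

lemma K_closure: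
  fixes Y T :: "'a::chilbert_space \<Rightarrow> 'a"
  assumes Y: "bounded_clinear Y" "positive_op Y" and T: "bounded_clinear T"
    and h: "\<And>y. norm (orth_proj (kperp Y) (T (op_sqrt Y y))) \<le> norm (op_sqrt Y y)"
  shows "\<And>v. v \<in> kperp Y \<Longrightarrow> norm (orth_proj (kperp Y) (T v)) \<le> norm v"
proof -
  define M where "M = kperp Y"
  have M: "csub M" "closed M" by (auto simp: M_def csub_kperp closed_kperp)
  define S where "S = {v. norm (orth_proj M (T v)) \<le> norm v}"
  have "closed S" unfolding S_def
    by (intro closed_Collect_le continuous_on_norm continuous_on_id continuous_on_compose2[OF proj_continuous[OF M]]
        bcl_continuous_on[OF T]) auto
  moreover have "range (op_sqrt Y) \<subseteq> S" using h by (auto simp: S_def M_def)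
  ultimately have "closure (range (op_sqrt Y)) \<subseteq> S" by (rule closure_minimal[rotated])
  then show "\<And>v. v \<in> kperp Y \<Longrightarrow> norm (orth_proj (kperp Y) (T v)) \<le> norm v"
    using kperp_sqrt[OF Y] by (auto simp: S_def M_def)
qed

lemma sqrt_in_kperp:
  fixes Y :: "'a::chilbert_space \<Rightarrow> 'a"
  assumes Y: "bounded_clinear Y" "positive_op Y"
  shows "op_sqrt Y x \<in> kperp Y"
  using closure_subset[of "range (op_sqrt Y)"] kperp_sqrt[OF Y] by auto



definition domP :: "('a::chilbert_space \<Rightarrow> 'a) \<Rightarrow> bool" where
  "domP T \<longleftrightarrow> bounded_clinear T \<and> concave_op T \<and> regular_op (Delta T) T"

definition codP :: "('a::chilbert_space \<Rightarrow> 'a) \<Rightarrow> bool" where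
  "codP C \<longleftrightarrow> bounded_clinear C \<and> left_invertible C \<and> hypercontraction2 C \<and>
         (defect_op C \<circ> defect_op C) \<circ> C = defect_op C \<circ> C \<circ> defect_op C \<and>
         (\<forall>h \<in> closure (range (defect_op C)).
            norm (orth_proj (closure (range (defect_op C))) (C h)) \<le> norm (adj C (C h)))"

lemma fwd:
  fixes T :: "'a::chilbert_space \<Rightarrow> 'a"
  assumes T: "bounded_clinear T" and cc: "concave_op T" and rg: "regular_op (Delta T) T"
  shows "codP (cauchy_dual T)" "cauchy_dual (cauchy_dual T) = T"
proof -
  define A where "A = (\<lambda>x. adj T (T x))"
  have Ab: "bounded_clinear A" unfolding A_def by (rule AT_bcl[OF T])
  have Asa: "selfadj A" unfolding A_def by (rule AT_selfadj[OF T])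
  have cv: "\<And>x. (norm (T (T x)))\<^sup>2 - 2 * (norm (T x))\<^sup>2 + (norm x)\<^sup>2 \<le> 0"
    using cc concave_iff[OF T] by blast
  have exp: "\<And>x. norm x \<le> norm (T x)" by (rule expansive[OF cv])
  have lb: "\<And>x. 1 * (norm x)\<^sup>2 \<le> Re (cinner (A x) x)"
    using exp by (simp add: A_def normsq_AT[OF T] power_mono)
  note iv = inv_op[OF Ab Asa zero_less_one lb]
  define Ai where "Ai = inv A"
  have AAi: "\<And>x. A (Ai x) = x" and AiA: "\<And>x. Ai (A x) = x" and Aib: "bounded_clinear Ai"
    and Aisa: "selfadj Ai" and Aic: "\<And>x. norm (Ai x) \<le> norm x"
    using iv by (auto simp: Ai_def)
  have AAi': "\<And>x. adj T (T (Ai x)) = x" using AAi by (simp add: A_def)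
  define C where "C = cauchy_dual T"
  have Cdef: "C = (\<lambda>x. T (Ai x))" by (simp add: C_def cauchy_dual_def Ai_def A_def comp_def)
  have Cb: "bounded_clinear C" unfolding Cdef by (rule bcl_comp[OF T Aib])
  have adjC: "adj C = (\<lambda>x. Ai (adj T x))"
  proof (rule adj_eq)
    show "is_adj C (\<lambda>x. Ai (adj T x))" unfolding is_adj_def Cdef
    proof (intro allI)
      fix x y
      have "cinner (T (Ai x)) y = cinner (Ai x) (adj T y)" by (rule adj_props(3)[OF T])
      also have "\<dots> = cinner x (Ai (adj T y))" using Aisa by (simp add: selfadj_def)
      finally show "cinner (T (Ai x)) y = cinner x (Ai (adj T y))" .
    qed
  qed
  have CC: "\<And>x. adj C (C x) = Ai x"
  proof -
    fix x
    have "adj C (C x) = Ai (adj T (T (Ai x)))" unfolding adjC by (simp add: Cdef)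
    then show "adj C (C x) = Ai x" by (simp add: AAi')
  qed
  have Cc: "\<And>x. norm (C x) \<le> norm x"
  proof -
    fix x
    have "(norm (C x))\<^sup>2 = Re (cinner (adj C (C x)) x)" by (rule normsq_AT[OF Cb, symmetric])
    also have "\<dots> = Re (cinner (Ai x) x)" by (simp add: CC)
    also have "\<dots> \<le> norm (Ai x) * norm x" by (rule Re_cinner_le)
    also have "\<dots> \<le> norm x * norm x" by (intro mult_right_mono Aic) simp
    finally have "(norm (C x))\<^sup>2 \<le> (norm x)\<^sup>2" by (simp add: power2_eq_square)
    then show "norm (C x) \<le> norm x" by (rule power2_le_imp_le) simp
  qed
  define Dl where "Dl = Delta T"
  have Dl_eq: "Dl = (\<lambda>x. A x - x)" by (simp add: Dl_def Delta_def A_def)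
  have Dlb: "bounded_clinear Dl" unfolding Dl_eq by (intro bcl_diff_op Ab bcl_id)
  have Dlf: "\<And>z. cinner (Dl z) z = complex_of_real ((norm (T z))\<^sup>2 - (norm z)\<^sup>2)"
    by (simp add: Dl_eq A_def form_AT(1)[OF T])
  have Dlp: "positive_op Dl"
    by (rule positive_of_form[OF Dlf]) (simp add: exp power_mono)
  define E where "E = (\<lambda>x. x - adj C (C x))"
  have E_eq: "\<And>x. E x = Ai (Dl x)" by (simp add: E_def CC Dl_eq bcl_diff[OF Aib] AiA)
  have Eb: "bounded_clinear E" unfolding E_def by (intro bcl_diff_op bcl_id AT_bcl Cb)
  have Ef: "\<And>z. cinner (E z) z = complex_of_real ((norm z)\<^sup>2 - (norm (C z))\<^sup>2)"
    by (simp add: E_def form_AT(2)[OF Cb])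
  have Ep: "positive_op E"
    by (rule positive_of_form[OF Ef]) (simp add: Cc power_mono)
  have RgT: "\<And>x. Dl (Dl (T x)) = Dl (T (Dl x))"
    using rg regular_iff[OF Dlb Dlp T] by (simp add: Dl_def)
  have RgC': "\<And>x. E (E (C x)) = E (C (E x))"
  proof -
    fix x
    have "Ai (Dl (Ai (Dl (T (Ai x))))) = Ai (Dl (T (Ai (Ai (Dl x)))))"
      by (rule reg_transfer[OF T Dlb Aib AiA AAi _ RgT, where s=1]) (simp add: Dl_eq)
    then show "E (E (C x)) = E (C (E x))" by (simp add: E_eq Cdef)
  qed
  have RgC: "regular_op E C" using regular_iff[OF Eb Ep Cb] RgC' by blast
  define D where "D = defect_op C"
  have D_eq: "D = op_sqrt E" by (simp add: D_def defect_op_def E_def)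
  note sfE = sqrt_facts[OF Eb Ep]
  have DD: "(D \<circ> D) \<circ> C = D \<circ> C \<circ> D"
    using RgC sfE(3) by (simp add: regular_op_def D_eq fun_eq_iff)
  have kerE: "\<And>x. E x = 0 \<longleftrightarrow> Dl x = 0"
  proof -
    fix x
    show "E x = 0 \<longleftrightarrow> Dl x = 0"
    proof
      assume "E x = 0"
      then have "Ai (Dl x) = 0" by (simp add: E_eq)
      then have "A (Ai (Dl x)) = 0" using bcl_zero[OF Ab] by simp
      then show "Dl x = 0" by (simp add: AAi)
    next
      assume "Dl x = 0" then show "E x = 0" by (simp add: E_eq bcl_zero[OF Aib])
    qed
  qed
  have kEq: "kperp E = kperp Dl" by (rule kperp_cong[OF kerE])
  define M where "M = kperp Dl"
  have MD: "closure (range D) = M" unfolding D_eq M_def kperp_sqrt[OF Eb Ep] by (rule kEq)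
  have K: "\<And>v. v \<in> M \<Longrightarrow> norm (orth_proj M (T v)) \<le> norm v"
    unfolding M_def
  proof (rule K_closure[OF Dlb Dlp T])
    fix y
    have eq: "op_sqrt Dl (T y) = orth_proj (kperp Dl) (T (op_sqrt Dl y))"
      by (rule reg_proj[OF Dlb Dlp T rg[folded Dl_def]])
    have f: "(norm (op_sqrt Dl z))\<^sup>2 = (norm (T z))\<^sup>2 - (norm z)\<^sup>2" for z
    proof -
      have "complex_of_real ((norm (op_sqrt Dl z))\<^sup>2) = cinner (Dl z) z"
        by (rule sqrt_kernel(2)[OF Dlb Dlp, symmetric])
      also have "\<dots> = complex_of_real ((norm (T z))\<^sup>2 - (norm z)\<^sup>2)" by (rule Dlf)
      finally show ?thesis by (simp only: of_real_eq_iff)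
    qed
    have "(norm (op_sqrt Dl (T y)))\<^sup>2 \<le> (norm (op_sqrt Dl y))\<^sup>2"
      using f[of "T y"] f[of y] cv[of y] by simp
    then have "norm (op_sqrt Dl (T y)) \<le> norm (op_sqrt Dl y)" by (rule power2_le_imp_le) simp
    then show "norm (orth_proj (kperp Dl) (T (op_sqrt Dl y))) \<le> norm (op_sqrt Dl y)"
      by (simp add: eq)
  qed
  have AiM: "\<And>h. h \<in> M \<Longrightarrow> Ai h \<in> M"
  proof -
    fix h assume h: "h \<in> M"
    show "Ai h \<in> M" unfolding M_def kperp_def
    proof (intro CollectI allI impI)
      fix z assume z: "Dl z = 0"
      have "Dl (Ai z) = Ai (Dl z)" by (simp add: Dl_eq AAi AiA bcl_diff[OF Aib])
      then have "Dl (Ai z) = 0" using z bcl_zero[OF Aib] by simp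
      then have "cinner (Ai z) h = 0" using h by (simp add: M_def kperp_def)
      then show "cinner z (Ai h) = 0" using Aisa by (simp add: selfadj_def)
    qed
  qed
  have NC: "\<forall>h \<in> closure (range D). norm (orth_proj (closure (range D)) (C h)) \<le> norm (adj C (C h))"
    unfolding MD
  proof
    fix h assume h: "h \<in> M"
    have "C h = T (Ai h)" by (simp add: Cdef)
    then show "norm (orth_proj M (C h)) \<le> norm (adj C (C h))" using K[OF AiM[OF h]] CC[of h] by simp
  qed
  have H2: "\<And>x. 0 \<le> (norm x)\<^sup>2 - 2 * (norm (C x))\<^sup>2 + (norm (C (C x)))\<^sup>2"
  proof -
    fix x
    have f: "(norm (D z))\<^sup>2 = (norm z)\<^sup>2 - (norm (C z))\<^sup>2" for z
    proof -
      have "complex_of_real ((norm (D z))\<^sup>2) = cinner (E z) z"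
        unfolding D_eq by (rule sqrt_kernel(2)[OF Eb Ep, symmetric])
      also have "\<dots> = complex_of_real ((norm z)\<^sup>2 - (norm (C z))\<^sup>2)" by (rule Ef)
      finally show ?thesis by (simp only: of_real_eq_iff)
    qed
    have eq: "D (C x) = orth_proj M (C (D x))"
      using reg_proj[OF Eb Ep Cb RgC] by (simp add: D_eq M_def kEq)
    have "D x \<in> M" using sqrt_in_kperp[OF Eb Ep] by (simp add: D_eq M_def kEq)
    then have "norm (orth_proj M (C (D x))) \<le> norm (adj C (C (D x)))" using NC MD by auto
    also have "\<dots> = norm (Ai (D x))" by (simp add: CC)
    also have "\<dots> \<le> norm (D x)" by (rule Aic)
    finally have "norm (D (C x)) \<le> norm (D x)" by (simp add: eq)
    then have "(norm (D (C x)))\<^sup>2 \<le> (norm (D x))\<^sup>2" by (simp add: power_mono)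
    then show "0 \<le> (norm x)\<^sup>2 - 2 * (norm (C x))\<^sup>2 + (norm (C (C x)))\<^sup>2"
      using f[of "C x"] f[of x] by simp
  qed
  have LI: "left_invertible C"
    unfolding left_invertible_def
    by (rule exI[of _ "adj T"]) (simp add: adj_props(2)[OF T] fun_eq_iff Cdef AAi')
  have HC: "hypercontraction2 C" using hyper_iff[OF Cb] Cc H2 by blast
  show "codP (cauchy_dual T)"
    unfolding C_def[symmetric] codP_def D_def[symmetric]
    using Cb LI HC DD NC by blast
  have "adj C \<circ> C = Ai" by (simp add: fun_eq_iff CC)
  moreover have "inv Ai = A" by (rule inv_equality) (simp_all add: AAi AiA)
  ultimately have "cauchy_dual C = C \<circ> A" by (simp add: cauchy_dual_def)
  also have "\<dots> = T" by (simp add: Cdef fun_eq_iff AiA)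
  finally show "cauchy_dual (cauchy_dual T) = T" by (simp add: C_def)
qed

lemma bwd:
  fixes C :: "'a::chilbert_space \<Rightarrow> 'a"
  assumes cp: "codP C"
  shows "\<exists>T. domP T \<and> cauchy_dual T = C"
proof -
  have Cb: "bounded_clinear C" and LI: "left_invertible C" and HC: "hypercontraction2 C"
    and DD: "(defect_op C \<circ> defect_op C) \<circ> C = defect_op C \<circ> C \<circ> defect_op C"
    and NC: "\<forall>h \<in> closure (range (defect_op C)).
            norm (orth_proj (closure (range (defect_op C))) (C h)) \<le> norm (adj C (C h))"
    using cp unfolding codP_def by auto
  have Cc: "\<And>x. norm (C x) \<le> norm x" using HC hyper_iff[OF Cb] by blast
  obtain S where Sb: "bounded_clinear S" and SC: "S \<circ> C = id" using LI unfolding left_invertible_def by blast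
  have SCx: "\<And>x. S (C x) = x" using SC by (simp add: fun_eq_iff)
  obtain KS where KS: "\<And>x. norm (S x) \<le> norm x * KS" "KS > 0" using bcl_bound[OF Sb] by blast
  have low: "\<And>x. norm x \<le> norm (C x) * KS" using KS(1) SCx by metis
  define c where "c = 1 / KS\<^sup>2"
  have c0: "c > 0" using KS(2) by (simp add: c_def)
  define G where "G = (\<lambda>x. adj C (C x))"
  have Gb: "bounded_clinear G" unfolding G_def by (rule AT_bcl[OF Cb])
  have Gsa: "selfadj G" unfolding G_def by (rule AT_selfadj[OF Cb])
  have lb: "\<And>x. c * (norm x)\<^sup>2 \<le> Re (cinner (G x) x)"
  proof -
    fix x
    have "(norm x)\<^sup>2 \<le> (norm (C x) * KS)\<^sup>2" by (rule power_mono[OF low]) simp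
    then have "c * (norm x)\<^sup>2 \<le> c * (norm (C x) * KS)\<^sup>2" using c0 by (intro mult_left_mono) auto
    also have "c * (norm (C x) * KS)\<^sup>2 = (norm (C x))\<^sup>2" using KS(2) by (simp add: c_def power_mult_distrib)
    finally show "c * (norm x)\<^sup>2 \<le> Re (cinner (G x) x)" by (simp add: G_def normsq_AT[OF Cb])
  qed
  note iv = inv_op[OF Gb Gsa c0 lb]
  define Gi where "Gi = inv G"
  have GGi: "\<And>x. G (Gi x) = x" and GiG: "\<And>x. Gi (G x) = x" and Gib: "bounded_clinear Gi"
    and Gisa: "selfadj Gi"
    using iv by (auto simp: Gi_def)
  have GGi': "\<And>x. adj C (C (Gi x)) = x" using GGi by (simp add: G_def)
  define T where "T = (\<lambda>x. C (Gi x))"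
  have Tb: "bounded_clinear T" unfolding T_def by (rule bcl_comp[OF Cb Gib])
  have adjT: "adj T = (\<lambda>x. Gi (adj C x))"
  proof (rule adj_eq)
    show "is_adj T (\<lambda>x. Gi (adj C x))" unfolding is_adj_def T_def
    proof (intro allI)
      fix x y
      have "cinner (C (Gi x)) y = cinner (Gi x) (adj C y)" by (rule adj_props(3)[OF Cb])
      also have "\<dots> = cinner x (Gi (adj C y))" using Gisa by (simp add: selfadj_def)
      finally show "cinner (C (Gi x)) y = cinner x (Gi (adj C y))" .
    qed
  qed
  have TT: "\<And>x. adj T (T x) = Gi x"
  proof -
    fix x
    have "adj T (T x) = Gi (adj C (C (Gi x)))" unfolding adjT by (simp add: T_def)
    then show "adj T (T x) = Gi x" by (simp add: GGi')
  qed
  have cd: "cauchy_dual T = C"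
  proof -
    have "adj T \<circ> T = Gi" by (simp add: fun_eq_iff TT)
    moreover have "inv Gi = G" by (rule inv_equality) (simp_all add: GGi GiG)
    ultimately have "cauchy_dual T = T \<circ> G" by (simp add: cauchy_dual_def)
    also have "\<dots> = C" by (simp add: T_def fun_eq_iff GiG)
    finally show ?thesis .
  qed
  define E where "E = (\<lambda>x. x - adj C (C x))"
  have Eb: "bounded_clinear E" unfolding E_def by (intro bcl_diff_op bcl_id AT_bcl Cb)
  have Ef: "\<And>z. cinner (E z) z = complex_of_real ((norm z)\<^sup>2 - (norm (C z))\<^sup>2)"
    by (simp add: E_def form_AT(2)[OF Cb])
  have Ep: "positive_op E"
    by (rule positive_of_form[OF Ef]) (simp add: Cc power_mono)
  define Dl where "Dl = Delta T"
  have Dl_eq: "\<And>x. Dl x = Gi x - x" by (simp add: Dl_def Delta_def TT)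
  have Dl_eq2: "\<And>x. Dl x = Gi (E x)"
    by (simp add: Dl_eq E_def bcl_diff[OF Gib] GiG[unfolded G_def])
  have Dlb: "bounded_clinear Dl" unfolding Dl_def Delta_def by (intro bcl_diff_op bcl_id AT_bcl Tb)
  have Dlf: "\<And>z. cinner (Dl z) z = complex_of_real ((norm (T z))\<^sup>2 - (norm z)\<^sup>2)"
    by (simp add: Dl_def Delta_def form_AT(1)[OF Tb])
  have exp: "\<And>z. norm z \<le> norm (T z)"
  proof -
    fix z
    have "norm z = norm (adj C (C (Gi z)))" by (simp add: GGi')
    also have "\<dots> \<le> norm (C (Gi z))" by (rule adj_contr[OF Cb Cc])
    finally show "norm z \<le> norm (T z)" by (simp add: T_def)
  qed
  have Dlp: "positive_op Dl"
    by (rule positive_of_form[OF Dlf]) (simp add: exp power_mono)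
  note sfE = sqrt_facts[OF Eb Ep]
  have D_eq: "defect_op C = op_sqrt E" by (simp add: defect_op_def E_def)
  have RgC: "regular_op E C"
    using DD sfE(3) unfolding regular_op_def D_eq by (simp add: fun_eq_iff)
  have RgC': "\<And>x. E (E (C x)) = E (C (E x))" using RgC regular_iff[OF Eb Ep Cb] by blast
  have RgT': "\<And>x. Dl (Dl (T x)) = Dl (T (Dl x))"
  proof -
    fix x
    have "Gi (E (Gi (E (C (Gi x))))) = Gi (E (C (Gi (Gi (E x)))))"
      by (rule reg_transfer[OF Cb Eb Gib GiG GGi _ RgC', where s="-1"]) (simp add: E_def G_def)
    then show "Dl (Dl (T x)) = Dl (T (Dl x))" by (simp add: Dl_eq2 T_def)
  qed
  have regT: "regular_op Dl T" using RgT' regular_iff[OF Dlb Dlp Tb] by blast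
  have kerE: "\<And>x. E x = 0 \<longleftrightarrow> Dl x = 0"
  proof -
    fix x
    show "E x = 0 \<longleftrightarrow> Dl x = 0"
    proof
      assume "E x = 0" then show "Dl x = 0" by (simp add: Dl_eq2 bcl_zero[OF Gib])
    next
      assume "Dl x = 0"
      then have "Gi (E x) = 0" by (simp add: Dl_eq2)
      then have "G (Gi (E x)) = 0" using bcl_zero[OF Gb] by simp
      then show "E x = 0" by (simp add: GGi)
    qed
  qed
  have kEq: "kperp E = kperp Dl" by (rule kperp_cong[OF kerE])
  define M where "M = kperp Dl"
  have MD: "closure (range (defect_op C)) = M" unfolding D_eq M_def kperp_sqrt[OF Eb Ep] by (rule kEq)
  have GiM: "\<And>h. h \<in> M \<Longrightarrow> Gi h \<in> M"
  proof -
    fix h assume h: "h \<in> M"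
    show "Gi h \<in> M" unfolding M_def kperp_def
    proof (intro CollectI allI impI)
      fix z assume z: "Dl z = 0"
      have "Dl (Gi z) = Gi (Dl z)" by (simp add: Dl_eq bcl_diff[OF Gib])
      then have "Dl (Gi z) = 0" using z bcl_zero[OF Gib] by simp
      then have "cinner (Gi z) h = 0" using h by (simp add: M_def kperp_def)
      then show "cinner z (Gi h) = 0" using Gisa by (simp add: selfadj_def)
    qed
  qed
  have K: "\<And>v. v \<in> M \<Longrightarrow> norm (orth_proj M (T v)) \<le> norm v"
  proof -
    fix v assume v: "v \<in> M"
    have "Gi v \<in> closure (range (defect_op C))" using GiM[OF v] MD by simp
    then have "norm (orth_proj M (C (Gi v))) \<le> norm (adj C (C (Gi v)))" using NC MD by auto
    then show "norm (orth_proj M (T v)) \<le> norm v" by (simp add: T_def GGi')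
  qed
  have cv: "\<And>x. (norm (T (T x)))\<^sup>2 - 2 * (norm (T x))\<^sup>2 + (norm x)\<^sup>2 \<le> 0"
  proof -
    fix x
    have f: "(norm (op_sqrt Dl z))\<^sup>2 = (norm (T z))\<^sup>2 - (norm z)\<^sup>2" for z
    proof -
      have "complex_of_real ((norm (op_sqrt Dl z))\<^sup>2) = cinner (Dl z) z"
        by (rule sqrt_kernel(2)[OF Dlb Dlp, symmetric])
      also have "\<dots> = complex_of_real ((norm (T z))\<^sup>2 - (norm z)\<^sup>2)" by (rule Dlf)
      finally show ?thesis by (simp only: of_real_eq_iff)
    qed
    have eq: "op_sqrt Dl (T x) = orth_proj M (T (op_sqrt Dl x))"
      unfolding M_def by (rule reg_proj[OF Dlb Dlp Tb regT])
    have "op_sqrt Dl x \<in> M" unfolding M_def by (rule sqrt_in_kperp[OF Dlb Dlp])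
    then have "norm (op_sqrt Dl (T x)) \<le> norm (op_sqrt Dl x)" using K by (simp add: eq)
    then have "(norm (op_sqrt Dl (T x)))\<^sup>2 \<le> (norm (op_sqrt Dl x))\<^sup>2" by (simp add: power_mono)
    then show "(norm (T (T x)))\<^sup>2 - 2 * (norm (T x))\<^sup>2 + (norm x)\<^sup>2 \<le> 0"
      using f[of "T x"] f[of x] by simp
  qed
  have "domP T"
    unfolding domP_def using Tb concave_iff[OF Tb] cv regT by (simp add: Dl_def)
  then show ?thesis using cd by blast
qed

theorem theorem3p1:
  fixes dummy :: "'a::chilbert_space"
  shows "bij_betw (cauchy_dual :: ('a \<Rightarrow> 'a) \<Rightarrow> ('a \<Rightarrow> 'a))
     {T. bounded_clinear T \<and> concave_op T \<and> regular_op (Delta T) T}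
     {C. bounded_clinear C \<and> left_invertible C \<and> hypercontraction2 C \<and>
         (defect_op C \<circ> defect_op C) \<circ> C = defect_op C \<circ> C \<circ> defect_op C \<and>
         (\<forall>h \<in> closure (range (defect_op C)).
            norm (orth_proj (closure (range (defect_op C))) (C h)) \<le> norm (adj C (C h)))}"
proof -
  have 1: "{T. bounded_clinear T \<and> concave_op T \<and> regular_op (Delta T) T} = {T::'a\<Rightarrow>'a. domP T}"
    unfolding domP_def by simp
  have 2: "{C. bounded_clinear C \<and> left_invertible C \<and> hypercontraction2 C \<and>
         (defect_op C \<circ> defect_op C) \<circ> C = defect_op C \<circ> C \<circ> defect_op C \<and>
         (\<forall>h \<in> closure (range (defect_op C)).
            norm (orth_proj (closure (range (defect_op C))) (C h)) \<le> norm (adj C (C h)))}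
     = {C::'a\<Rightarrow>'a. codP C}"
    unfolding codP_def by simp
  have dd: "\<And>T::'a\<Rightarrow>'a. domP T \<Longrightarrow> cauchy_dual (cauchy_dual T) = T"
    unfolding domP_def using fwd(2) by blast
  have im: "\<And>T::'a\<Rightarrow>'a. domP T \<Longrightarrow> codP (cauchy_dual T)"
    unfolding domP_def using fwd(1) by blast
  show ?thesis unfolding 1 2 bij_betw_def
  proof (intro conjI)
    show "inj_on (cauchy_dual :: ('a \<Rightarrow> 'a) \<Rightarrow> ('a \<Rightarrow> 'a)) {T. domP T}"
    proof (rule inj_onI)
      fix T1 T2 :: "'a \<Rightarrow> 'a"
      assume "T1 \<in> {T. domP T}" "T2 \<in> {T. domP T}" "cauchy_dual T1 = cauchy_dual T2"
      then show "T1 = T2" using dd by (metis mem_Collect_eq)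
    qed
    show "(cauchy_dual :: ('a \<Rightarrow> 'a) \<Rightarrow> ('a \<Rightarrow> 'a)) ` {T. domP T} = {C. codP C}"
    proof (intro equalityI subsetI)
      fix C assume "C \<in> cauchy_dual ` {T::'a\<Rightarrow>'a. domP T}"
      then show "C \<in> {C. codP C}" using im by auto
    next
      fix C :: "'a \<Rightarrow> 'a" assume "C \<in> {C. codP C}"
      then obtain T where "domP T" "cauchy_dual T = C" using bwd by blast
      then show "C \<in> cauchy_dual ` {T. domP T}" by blast
    qed
  qed
qed


end
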